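(* Let $W_i\sim\hat N(0,[\underline\sigma^2,\overline\sigma^2])$ with decompositions $W_i=V_i\epsilon_i$, $i=1,\dots,n$, and let $\varphi\in C_{l.Lip}(\mathbb R^n)$ be convex or concave. Then $\hat{\mathbb E}[\varphi(W_1,\dots,W_n)]$ takes the same value whether $W_1,\dots,W_n$ are sequentially independent ($W_1\dashrightarrow\cdots\dashrightarrow W_n$) or semi-sequentially independent ($V_1\dashrightarrow\cdots\dashrightarrow V_n\dashrightarrow\epsilon_1\dashrightarrow\cdots\dashrightarrow\epsilon_n$), and in either case $$\hat{\mathbb E}[\varphi(W_1,\dots,W_n)]=\begin{cases}E[\varphi(\underline\sigma\varepsilon_1,\dots,\underline\sigma\varepsilon_n)]&\varphi\text{ concave},\\ E[\varphi(\overline\sigma\varepsilon_1,\dots,\overline\sigma\varepsilon_n)]&\varphi\text{ convex},\end{cases}$$ where $\varepsilon_1,\dots,\varepsilon_n$ are classical i.i.d. $N(0,1)$.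
   Context: Sublinear expectation space $(\Omega,\mathcal H,\hat{\mathbb E})$, $\hat{\mathbb E}[X]=\sup_{Q\in\mathcal P}E_Q[X]$. $C_{b,Lip}$: bounded Lipschitz; $C_{l.Lip}(\mathbb R^n)$: $|\varphi(x)-\varphi(y)|\le C(1+|x|^k+|y|^k)|x-y|$. $X\dashrightarrow Y$ means $\hat{\mathbb E}[\varphi(X,Y)]=\hat{\mathbb E}[\hat{\mathbb E}[\varphi(x,Y)]_{x=X}]$ for all $\varphi\in C_{b,Lip}$; chains mean $(X_1,\dots,X_i)\dashrightarrow X_{i+1}$ for each $i$. $V\sim\mathcal M[\underline\sigma,\overline\sigma]$: $\hat{\mathbb E}[\varphi(V)]=\max_{v\in[\underline\sigma,\overline\sigma]}\varphi(v)$. $\epsilon\sim N(0,1)$: $\hat{\mathbb E}[\varphi(\epsilon)]=E[\varphi(Z)]$, $Z$ classical standard normal. Semi-$G$-normal $W\sim\hat N(0,[\underline\sigma^2,\overline\sigma^2])$ ($0\le\underline\sigma\le\overline\sigma$): $W=V\epsilon$ with $V\sim\mathcal M[\underline\sigma,\overline\sigma]$, $\epsilon\sim N(0,1)$, $V\dashrightarrow\epsilon$. *)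

theory Defs
  imports "HOL-Probability.Probability"
begin

text \<open>Points of R^k are represented as real lists of length k.\<close>

definition vnorm :: "real list \<Rightarrow> real" where
  "vnorm xs = sqrt (\<Sum>x\<leftarrow>xs. x ^ 2)"

definition vdist :: "real list \<Rightarrow> real list \<Rightarrow> real" where
  "vdist xs ys = vnorm (map2 (-) xs ys)"

definition bLip :: "nat \<Rightarrow> (real list \<Rightarrow> real) \<Rightarrow> bool" where
  "bLip k \<phi> \<longleftrightarrow>
     (\<exists>C. \<forall>x. length x = k \<longrightarrow> \<bar>\<phi> x\<bar> \<le> C) \<and>
     (\<exists>L. \<forall>x y. length x = k \<longrightarrow> length y = k \<longrightarrow> \<bar>\<phi> x - \<phi> y\<bar> \<le> L * vdist x y)"

definition lLip :: "nat \<Rightarrow> (real list \<Rightarrow> real) \<Rightarrow> bool" where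
  "lLip k \<phi> \<longleftrightarrow>
     (\<exists>C (m::nat). \<forall>x y. length x = k \<longrightarrow> length y = k \<longrightarrow>
        \<bar>\<phi> x - \<phi> y\<bar> \<le> C * (1 + vnorm x ^ m + vnorm y ^ m) * vdist x y)"

definition convex_fn :: "nat \<Rightarrow> (real list \<Rightarrow> real) \<Rightarrow> bool" where
  "convex_fn k \<phi> \<longleftrightarrow>
     (\<forall>x y t. length x = k \<longrightarrow> length y = k \<longrightarrow> 0 \<le> t \<longrightarrow> t \<le> 1 \<longrightarrow>
        \<phi> (map2 (\<lambda>a b. t * a + (1 - t) * b) x y) \<le> t * \<phi> x + (1 - t) * \<phi> y)"

definition concave_fn :: "nat \<Rightarrow> (real list \<Rightarrow> real) \<Rightarrow> bool" where
  "concave_fn k \<phi> \<longleftrightarrow> convex_fn k (\<lambda>x. - \<phi> x)"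

text \<open>Sublinear expectation space (\<Omega>, H, E) with E[X] = sup_{Q in P} E_Q[X]:
  P is a nonempty family of probability measures on the measurable space M,
  every X in H is measurable, Q-integrable for all Q in P with bounded expectations,
  H contains the constants and is closed under C_{l.Lip} transformations.\<close>
definition sublinear_space :: "'a measure \<Rightarrow> 'a measure set \<Rightarrow> ('a \<Rightarrow> real) set \<Rightarrow> bool" where
  "sublinear_space M P H \<longleftrightarrow>
     P \<noteq> {} \<and>
     (\<forall>Q\<in>P. prob_space Q \<and> sets Q = sets M \<and> space Q = space M) \<and>
     (\<forall>X\<in>H. X \<in> borel_measurable M \<and> (\<forall>Q\<in>P. integrable Q X) \<and>
             bdd_above ((\<lambda>Q. integral\<^sup>L Q X) ` P)) \<and>
     (\<forall>c. (\<lambda>_. c) \<in> H) \<and>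
     (\<forall>Xs \<phi>. set Xs \<subseteq> H \<longrightarrow> lLip (length Xs) \<phi> \<longrightarrow>
        (\<lambda>\<omega>. \<phi> (map (\<lambda>X. X \<omega>) Xs)) \<in> H)"

definition sE :: "'a measure set \<Rightarrow> ('a \<Rightarrow> real) \<Rightarrow> real" where
  "sE P X = (SUP Q\<in>P. integral\<^sup>L Q X)"

definition vals :: "('a \<Rightarrow> real) list \<Rightarrow> 'a \<Rightarrow> real list" where
  "vals Xs \<omega> = map (\<lambda>X. X \<omega>) Xs"

definition indep_of :: "'a measure set \<Rightarrow> ('a \<Rightarrow> real) list \<Rightarrow> ('a \<Rightarrow> real) \<Rightarrow> bool" where
  "indep_of P Xs Y \<longleftrightarrow>
     (\<forall>\<phi>. bLip (length Xs + 1) \<phi> \<longrightarrow>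
        sE P (\<lambda>\<omega>. \<phi> (vals Xs \<omega> @ [Y \<omega>])) =
        sE P (\<lambda>\<omega>. sE P (\<lambda>\<omega>'. \<phi> (vals Xs \<omega> @ [Y \<omega>']))))"

definition seq_indep :: "'a measure set \<Rightarrow> ('a \<Rightarrow> real) list \<Rightarrow> bool" where
  "seq_indep P Zs \<longleftrightarrow> (\<forall>i. 0 < i \<and> i < length Zs \<longrightarrow> indep_of P (take i Zs) (Zs ! i))"

definition maximal_dist :: "'a measure set \<Rightarrow> ('a \<Rightarrow> real) \<Rightarrow> real \<Rightarrow> real \<Rightarrow> bool" where
  "maximal_dist P V a b \<longleftrightarrow>
     (\<forall>\<phi>. lLip 1 \<phi> \<longrightarrow> sE P (\<lambda>\<omega>. \<phi> [V \<omega>]) = (SUP v\<in>{a..b}. \<phi> [v]))"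

definition std_gauss :: "real measure" where
  "std_gauss = density lborel std_normal_density"

definition std_normal_dist :: "'a measure set \<Rightarrow> ('a \<Rightarrow> real) \<Rightarrow> bool" where
  "std_normal_dist P e \<longleftrightarrow>
     (\<forall>\<phi>. lLip 1 \<phi> \<longrightarrow> sE P (\<lambda>\<omega>. \<phi> [e \<omega>]) = (\<integral>z. \<phi> [z] \<partial>std_gauss))"

definition classical_E :: "nat \<Rightarrow> (real list \<Rightarrow> real) \<Rightarrow> real \<Rightarrow> real" where
  "classical_E n \<phi> s =
     (\<integral>z. \<phi> (map (\<lambda>i. s * z i) [0..<n]) \<partial>(PiM {..<n} (\<lambda>_. std_gauss)))"

end

theory Submission
  imports Defs
begin


lemma sum_list_sq_nonneg: "0 \<le> (\<Sum>x\<leftarrow>xs. (x::real)^2)"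
  by (induction xs) auto

lemma vnorm_nonneg[simp]: "0 \<le> vnorm xs" unfolding vnorm_def using sum_list_sq_nonneg by simp

lemma vnorm_sq: "(vnorm xs)^2 = (\<Sum>x\<leftarrow>xs. x^2)"
  unfolding vnorm_def using sum_list_sq_nonneg by simp

lemma vnorm_Nil[simp]: "vnorm [] = 0" unfolding vnorm_def by simp

lemma vnorm_Cons: "vnorm (a # xs) = sqrt (a^2 + (vnorm xs)^2)"
  unfolding vnorm_def using sum_list_sq_nonneg by simp

lemma vnorm_append: "vnorm (xs @ ys) = sqrt ((vnorm xs)^2 + (vnorm ys)^2)"
  by (simp add: vnorm_def sum_list_sq_nonneg)

lemma vnorm_single[simp]: "vnorm [a] = \<bar>a\<bar>"
  by (simp add: vnorm_def)

lemma sqrt_sum_sq_le: "0 \<le> a \<Longrightarrow> 0 \<le> b \<Longrightarrow> sqrt (a^2 + b^2) \<le> a + b"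
  by (rule real_le_lsqrt) (auto simp: power2_eq_square algebra_simps)

lemma vnorm_append_le: "vnorm (xs @ ys) \<le> vnorm xs + vnorm ys"
  unfolding vnorm_append by (rule sqrt_sum_sq_le) auto

lemma vnorm_append_ge1: "vnorm xs \<le> vnorm (xs @ ys)"
  unfolding vnorm_append by (rule real_le_rsqrt) simp

lemma vnorm_append_ge2: "vnorm ys \<le> vnorm (xs @ ys)"
  unfolding vnorm_append by (rule real_le_rsqrt) simp

lemma vnorm_le_sum_abs: "vnorm xs \<le> (\<Sum>x\<leftarrow>xs. \<bar>x\<bar>)"
proof (induction xs)
  case (Cons a xs)
  have "vnorm (a # xs) = sqrt (\<bar>a\<bar>^2 + (vnorm xs)^2)" by (simp add: vnorm_Cons)
  also have "\<dots> \<le> \<bar>a\<bar> + vnorm xs" by (rule sqrt_sum_sq_le) auto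
  finally show ?case using Cons by simp
qed simp

lemma abs_nth_le_vnorm: "i < length xs \<Longrightarrow> \<bar>xs!i\<bar> \<le> vnorm xs"
proof (induction xs arbitrary: i)
  case (Cons a xs)
  show ?case
  proof (cases i)
    case 0
    then show ?thesis by (simp add: vnorm_Cons real_le_rsqrt)
  next
    case (Suc j)
    then have "\<bar>xs!j\<bar> \<le> vnorm xs" using Cons by simp
    also have "vnorm xs \<le> vnorm (a # xs)"
      unfolding vnorm_Cons by (rule real_le_rsqrt) simp
    finally show ?thesis using Suc by simp
  qed
qed simp

lemma vnorm_replicate0[simp]: "vnorm (replicate k 0) = 0"
  by (induction k) (auto simp: vnorm_Cons)

lemma vnorm_triangle: "length x = length y \<Longrightarrow> vnorm (map2 (+) x y) \<le> vnorm x + vnorm y"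
proof (induction x y rule: list_induct2)
  case (Cons a x b y)
  have "vnorm (map2 (+) (a#x) (b#y)) = sqrt ((a+b)^2 + (vnorm (map2 (+) x y))^2)"
    by (simp add: vnorm_Cons)
  also have "\<dots> \<le> sqrt ((a+b)^2 + (vnorm x + vnorm y)^2)"
    using Cons by (intro real_sqrt_le_mono add_left_mono power_mono) auto
  also have "\<dots> = norm ((a, vnorm x) + (b, vnorm y))"
    by (simp add: norm_Pair)
  also have "\<dots> \<le> norm (a, vnorm x) + norm (b, vnorm y)" by (rule norm_triangle_ineq)
  also have "\<dots> = vnorm (a#x) + vnorm (b#y)" by (simp add: norm_Pair vnorm_Cons)
  finally show ?case .
qed simp

lemma vdist_nonneg[simp]: "0 \<le> vdist x y" by (simp add: vdist_def)

lemma vdist_self[simp]: "vdist x x = 0"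
proof -
  have "map2 (-) x x = replicate (length x) 0" by (induction x) auto
  then show ?thesis by (simp add: vdist_def)
qed

lemma vdist_Cons: "vdist (a#x) (b#y) = sqrt ((a-b)^2 + (vdist x y)^2)"
  by (simp add: vdist_def vnorm_Cons)

lemma vdist_sym: "vdist x y = vdist y x"
proof (induction x arbitrary: y)
  case Nil then show ?case by (simp add: vdist_def)
next
  case (Cons a x)
  then show ?case
  proof (cases y)
    case Nil then show ?thesis by (simp add: vdist_def)
  next
    case (Cons b y')
    have "(a - b)^2 = (b - a)^2" by (simp add: power2_commute)
    then show ?thesis using Cons \<open>\<And>y. vdist x y = vdist y x\<close> by (simp add: vdist_Cons)
  qed
qed

lemma vdist_append: "length a = length a' \<Longrightarrow>
   vdist (a@b) (a'@b') = sqrt ((vdist a a')^2 + (vdist b b')^2)"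
  by (simp add: vdist_def vnorm_append zip_append)

lemma vdist_single[simp]: "vdist [a] [b] = \<bar>a - b\<bar>"
  by (simp add: vdist_def)

lemma vdist_append_same_left: "vdist (p@b) (p@b') = vdist b b'"
  by (simp add: vdist_append)

lemma vdist_append_same_right: "length a = length a' \<Longrightarrow> vdist (a@q) (a'@q) = vdist a a'"
  by (simp add: vdist_append)

lemma vdist_triangle:
  assumes "length x = length y" "length y = length z"
  shows "vdist x z \<le> vdist x y + vdist y z"
proof -
  have e: "map2 (-) x z = map2 (+) (map2 (-) x y) (map2 (-) y z)"
    using assms by (induction x y z rule: list_induct3) auto
  have l: "length (map2 (-) x y) = length (map2 (-) y z)" using assms by simp
  show ?thesis unfolding vdist_def e by (rule vnorm_triangle[OF l])
qed

lemma vdist_zero_right: "vdist x (replicate (length x) 0) = vnorm x"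
proof -
  have "map2 (-) x (replicate (length x) 0) = x" by (induction x) auto
  then show ?thesis by (simp add: vdist_def)
qed

lemma vnorm_diff_le: assumes "length x = length y" shows "\<bar>vnorm x - vnorm y\<bar> \<le> vdist x y"
proof -
  let ?z = "replicate (length x) (0::real)"
  have zx: "vdist x ?z = vnorm x" by (rule vdist_zero_right)
  have zy: "vdist y ?z = vnorm y" using vdist_zero_right[of y] assms by simp
  have l: "length y = length ?z" "length x = length ?z" using assms by auto
  have a: "vdist x ?z \<le> vdist x y + vdist y ?z"
    by (rule vdist_triangle) (use assms l in auto)
  have b: "vdist y ?z \<le> vdist y x + vdist x ?z"
    by (rule vdist_triangle) (use assms l in auto)
  have c: "vdist y x = vdist x y" by (rule vdist_sym)
  from a b c zx zy show ?thesis by linarith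
qed

lemma vdist_ge_append1: "length a = length a' \<Longrightarrow> vdist a a' \<le> vdist (a@b) (a'@b')"
  by (simp add: vdist_append real_le_rsqrt)

lemma vdist_ge_append2: "length a = length a' \<Longrightarrow> vdist b b' \<le> vdist (a@b) (a'@b')"
  by (simp add: vdist_append real_le_rsqrt)

lemma vnorm_sq_idx: "(vnorm xs)^2 = (\<Sum>i<length xs. (xs!i)^2)"
  unfolding vnorm_sq by (simp add: sum_list_sum_nth atLeast0LessThan)

lemma vdist_sq_idx: "length x = length y \<Longrightarrow> (vdist x y)^2 = (\<Sum>i<length x. (x!i - y!i)^2)"
  unfolding vdist_def vnorm_sq_idx by simp

lemma vnorm_eq_idx: "vnorm xs = sqrt (\<Sum>i<length xs. (xs!i)^2)"
  by (metis vnorm_sq_idx vnorm_nonneg real_sqrt_unique)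

lemma vdist_eq_idx: "length x = length y \<Longrightarrow> vdist x y = sqrt (\<Sum>i<length x. (x!i - y!i)^2)"
  by (metis vdist_sq_idx vdist_nonneg real_sqrt_unique)



definition LL :: "nat \<Rightarrow> (real list \<Rightarrow> real) \<Rightarrow> real \<Rightarrow> nat \<Rightarrow> bool" where
  "LL k f C m \<longleftrightarrow> 0 \<le> C \<and> (\<forall>x y. length x = k \<longrightarrow> length y = k \<longrightarrow>
      \<bar>f x - f y\<bar> \<le> C * (1 + vnorm x + vnorm y)^m * vdist x y)"

lemma LLD: "LL k f C m \<Longrightarrow> length x = k \<Longrightarrow> length y = k \<Longrightarrow>
   \<bar>f x - f y\<bar> \<le> C * (1 + vnorm x + vnorm y)^m * vdist x y"
  unfolding LL_def by blast

lemma LL_nonneg: "LL k f C m \<Longrightarrow> 0 \<le> C" unfolding LL_def by blast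

lemma LLI: "0 \<le> C \<Longrightarrow> (\<And>x y. length x = k \<Longrightarrow> length y = k \<Longrightarrow>
   \<bar>f x - f y\<bar> \<le> C * (1 + vnorm x + vnorm y)^m * vdist x y) \<Longrightarrow> LL k f C m"
  unfolding LL_def by blast

lemma three_pow: "0 \<le> a \<Longrightarrow> 0 \<le> (b::real) \<Longrightarrow> 1 + a^m + b^m \<le> 3 * (1+a+b)^m"
proof -
  assume a: "0 \<le> a" and b: "0 \<le> b"
  have "1 \<le> (1+a+b)^m" using a b by (intro one_le_power) auto
  moreover have "a^m \<le> (1+a+b)^m" using a b by (intro power_mono) auto
  moreover have "b^m \<le> (1+a+b)^m" using a b by (intro power_mono) auto
  ultimately show ?thesis by linarith
qed

lemma pow_three: "0 \<le> a \<Longrightarrow> 0 \<le> (b::real) \<Longrightarrow> (1+a+b)^m \<le> 3^m * (1 + a^m + b^m)"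
proof -
  assume a: "0 \<le> a" and b: "0 \<le> b"
  let ?M = "max 1 (max a b)"
  have "(1+a+b)^m \<le> (3 * ?M)^m" using a b by (intro power_mono) auto
  also have "\<dots> = 3^m * ?M^m" by (simp add: power_mult_distrib)
  also have "?M^m \<le> 1 + a^m + b^m"
  proof -
    have "?M = 1 \<or> ?M = a \<or> ?M = b" by linarith
    moreover have "0 \<le> a^m" "0 \<le> b^m" using a b by auto
    ultimately show ?thesis by auto
  qed
  then have "3^m * ?M^m \<le> 3^m * (1 + a^m + b^m)" by simp
  finally show ?thesis .
qed

lemma lLip_imp_LL: "lLip k f \<Longrightarrow> \<exists>C m. LL k f C m"
proof -
  assume "lLip k f"
  then obtain C m where h: "\<And>x y. length x = k \<Longrightarrow> length y = k \<Longrightarrow>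
        \<bar>f x - f y\<bar> \<le> C * (1 + vnorm x ^ m + vnorm y ^ m) * vdist x y"
    unfolding lLip_def by blast
  have "LL k f (3 * \<bar>C\<bar>) m"
  proof (rule LLI)
    fix x y :: "real list" assume l: "length x = k" "length y = k"
    have p: "0 \<le> 1 + vnorm x ^ m + vnorm y ^ m" by simp
    have "\<bar>f x - f y\<bar> \<le> C * (1 + vnorm x ^ m + vnorm y ^ m) * vdist x y" using h l by blast
    also have "\<dots> \<le> \<bar>C\<bar> * (1 + vnorm x ^ m + vnorm y ^ m) * vdist x y"
      using p by (intro mult_right_mono) auto
    also have "\<dots> \<le> \<bar>C\<bar> * (3 * (1 + vnorm x + vnorm y)^m) * vdist x y"
      by (intro mult_right_mono mult_left_mono three_pow) auto
    finally show "\<bar>f x - f y\<bar> \<le> 3 * \<bar>C\<bar> * (1 + vnorm x + vnorm y)^m * vdist x y" by simp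
  qed simp
  then show ?thesis by blast
qed

lemma LL_imp_lLip: "LL k f C m \<Longrightarrow> lLip k f"
proof -
  assume L: "LL k f C m"
  have C: "0 \<le> C" using LL_nonneg[OF L] .
  have "\<forall>x y. length x = k \<longrightarrow> length y = k \<longrightarrow>
        \<bar>f x - f y\<bar> \<le> (C * 3^m) * (1 + vnorm x ^ m + vnorm y ^ m) * vdist x y"
  proof (intro allI impI)
    fix x y :: "real list" assume l: "length x = k" "length y = k"
    have "\<bar>f x - f y\<bar> \<le> C * (1 + vnorm x + vnorm y)^m * vdist x y" using LLD[OF L l] .
    also have "\<dots> \<le> C * (3^m * (1 + vnorm x ^ m + vnorm y ^ m)) * vdist x y"
      using C by (intro mult_right_mono mult_left_mono pow_three) auto
    finally show "\<bar>f x - f y\<bar> \<le> (C * 3^m) * (1 + vnorm x ^ m + vnorm y ^ m) * vdist x y"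
      by (simp add: mult.assoc)
  qed
  then show ?thesis unfolding lLip_def by blast
qed

lemma LL_mono: "LL k f C m \<Longrightarrow> C \<le> C' \<Longrightarrow> m \<le> m' \<Longrightarrow> LL k f C' m'"
proof -
  assume L: "LL k f C m" and c: "C \<le> C'" and mm: "m \<le> m'"
  have C: "0 \<le> C" using LL_nonneg[OF L] .
  show ?thesis
  proof (rule LLI)
    show "0 \<le> C'" using C c by simp
    fix x y :: "real list" assume l: "length x = k" "length y = k"
    have "\<bar>f x - f y\<bar> \<le> C * (1 + vnorm x + vnorm y)^m * vdist x y" using LLD[OF L l] .
    also have "\<dots> \<le> C' * (1 + vnorm x + vnorm y)^m' * vdist x y"
      using C c mm by (intro mult_right_mono mult_mono power_increasing) auto
    finally show "\<bar>f x - f y\<bar> \<le> C' * (1 + vnorm x + vnorm y)^m' * vdist x y" .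
  qed
qed

lemma LL_growth: assumes L: "LL k f C m" and l: "length x = k"
  shows "\<bar>f x\<bar> \<le> \<bar>f (replicate k 0)\<bar> + C * (1 + vnorm x)^m * vnorm x"
proof -
  have "\<bar>f x - f (replicate k 0)\<bar> \<le> C * (1 + vnorm x + vnorm (replicate k 0))^m * vdist x (replicate k 0)"
    using LLD[OF L l, where y="replicate k 0"] by simp
  also have "vdist x (replicate k 0) = vnorm x" using vdist_zero_right[of x] l by simp
  finally show ?thesis by simp
qed

lemma LL_growth2: assumes L: "LL k f C m" and l: "length x = k"
  shows "\<bar>f x\<bar> \<le> (\<bar>f (replicate k 0)\<bar> + C) * (1 + vnorm x)^(Suc m)"
proof -
  have C: "0 \<le> C" using LL_nonneg[OF L] .
  have 1: "1 \<le> (1 + vnorm x)^(Suc m)" by (intro one_le_power) simp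
  have "C * (1 + vnorm x)^m * vnorm x \<le> C * (1 + vnorm x)^m * (1 + vnorm x)"
    using C by (intro mult_left_mono) auto
  also have "\<dots> = C * (1 + vnorm x)^(Suc m)" by simp
  finally have 2: "C * (1 + vnorm x)^m * vnorm x \<le> C * (1 + vnorm x)^(Suc m)" .
  have "\<bar>f (replicate k 0)\<bar> \<le> \<bar>f (replicate k 0)\<bar> * (1 + vnorm x)^(Suc m)"
    using 1 by (metis abs_ge_zero mult.right_neutral mult_left_mono)
  then show ?thesis using LL_growth[OF L l] 2 by (simp add: distrib_right)
qed

lemma pow_diff_Suc: "0 \<le> a \<Longrightarrow> 0 \<le> (b::real) \<Longrightarrow>
   \<bar>a^(Suc j) - b^(Suc j)\<bar> \<le> real (Suc j) * (max a b)^j * \<bar>a - b\<bar>"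
proof (induction j)
  case 0 then show ?case by simp
next
  case (Suc j)
  let ?M = "max a b"
  have e: "a^(Suc (Suc j)) - b^(Suc (Suc j)) = a * (a^(Suc j) - b^(Suc j)) + b^(Suc j) * (a - b)"
    by (simp add: algebra_simps)
  have IH: "\<bar>a^(Suc j) - b^(Suc j)\<bar> \<le> real (Suc j) * ?M^j * \<bar>a - b\<bar>" using Suc by blast
  have aM: "a \<le> ?M" and M0: "0 \<le> ?M" using Suc.prems by auto
  have "\<bar>a * (a^(Suc j) - b^(Suc j))\<bar> = a * \<bar>a^(Suc j) - b^(Suc j)\<bar>" using Suc.prems by (simp add: abs_mult)
  also have "\<dots> \<le> ?M * (real (Suc j) * ?M^j * \<bar>a - b\<bar>)"
    using IH aM M0 by (intro mult_mono) auto
  finally have A: "\<bar>a * (a^(Suc j) - b^(Suc j))\<bar> \<le> ?M * (real (Suc j) * ?M^j * \<bar>a - b\<bar>)" .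
  have bM: "b^(Suc j) \<le> ?M^(Suc j)" using Suc.prems by (intro power_mono) auto
  have "\<bar>b^(Suc j) * (a - b)\<bar> = b^(Suc j) * \<bar>a - b\<bar>" using Suc.prems by (simp add: abs_mult)
  also have "\<dots> \<le> ?M^(Suc j) * \<bar>a - b\<bar>" using bM by (intro mult_right_mono) auto
  finally have B: "\<bar>b^(Suc j) * (a - b)\<bar> \<le> ?M^(Suc j) * \<bar>a - b\<bar>" .
  from A B have "\<bar>a^(Suc (Suc j)) - b^(Suc (Suc j))\<bar> \<le> ?M * (real (Suc j) * ?M^j * \<bar>a - b\<bar>) + ?M^(Suc j) * \<bar>a - b\<bar>"
    unfolding e by (smt (verit))
  also have "\<dots> = real (Suc (Suc j)) * ?M^(Suc j) * \<bar>a - b\<bar>" by (simp add: algebra_simps)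
  finally show ?case .
qed

lemma LL_vnorm_comp:
  assumes D: "0 \<le> D" and g: "\<And>u v. 0 \<le> u \<Longrightarrow> 0 \<le> v \<Longrightarrow> \<bar>g u - g v\<bar> \<le> D * (1+u+v)^p * \<bar>u - v\<bar>"
  shows "LL k (\<lambda>x. g (vnorm x)) D p"
proof (rule LLI[OF D])
  fix x y :: "real list" assume l: "length x = k" "length y = k"
  have "\<bar>g (vnorm x) - g (vnorm y)\<bar> \<le> D * (1 + vnorm x + vnorm y)^p * \<bar>vnorm x - vnorm y\<bar>"
    using g by simp
  also have "\<dots> \<le> D * (1 + vnorm x + vnorm y)^p * vdist x y"
    using D l vnorm_diff_le[of x y] by (intro mult_left_mono) auto
  finally show "\<bar>g (vnorm x) - g (vnorm y)\<bar> \<le> D * (1 + vnorm x + vnorm y)^p * vdist x y" .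
qed

lemma poly_lip:
  assumes a: "0 \<le> a" and b: "0 \<le> b" and y1: "0 \<le> y1" and y2: "0 \<le> (y2::real)"
  shows "abs ((a+b*y1)^(Suc j) - (a+b*y2)^(Suc j)) \<le> (real (Suc j) * b * (a+b)^j) * (1+y1+y2)^j * \<bar>y1 - y2\<bar>"
proof -
  let ?M = "max (a+b*y1) (a+b*y2)"
  have 1: "abs ((a+b*y1)^(Suc j) - (a+b*y2)^(Suc j)) \<le> real (Suc j) * ?M^j * abs ((a+b*y1) - (a+b*y2))"
    using a b y1 y2 by (intro pow_diff_Suc) auto
  have 2: "abs ((a+b*y1) - (a+b*y2)) = b * \<bar>y1 - y2\<bar>" using b by (simp add: abs_mult flip: right_diff_distrib)
  have "?M \<le> (a+b)*(1+y1+y2)"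
    using a b y1 y2 by (simp add: algebra_simps add_increasing mult_nonneg_nonneg)
  moreover have "0 \<le> ?M" using a b y1 y2 by (simp add: le_max_iff_disj)
  ultimately have 3: "?M^j \<le> ((a+b)*(1+y1+y2))^j"
    by (intro power_mono) auto
  have "real (Suc j) * ?M^j * (b * \<bar>y1 - y2\<bar>) \<le> real (Suc j) * ((a+b)*(1+y1+y2))^j * (b * \<bar>y1 - y2\<bar>)"
    using b 3 by (intro mult_right_mono mult_left_mono) auto
  also have "\<dots> = (real (Suc j) * b * (a+b)^j) * (1+y1+y2)^j * \<bar>y1 - y2\<bar>" by (simp add: power_mult_distrib)
  finally have 4: "real (Suc j) * ?M^j * (b * \<bar>y1 - y2\<bar>) \<le> (real (Suc j) * b * (a+b)^j) * (1+y1+y2)^j * \<bar>y1 - y2\<bar>" .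
  have 5: "abs ((a+b*y1)^(Suc j) - (a+b*y2)^(Suc j)) \<le> real (Suc j) * ?M^j * (b * \<bar>y1 - y2\<bar>)"
    using 1 unfolding 2 .
  show ?thesis using order.trans[OF 5 4] .
qed

lemma LL_vnorm_poly: "0 \<le> a \<Longrightarrow> 0 \<le> b \<Longrightarrow> \<exists>C m. LL k (\<lambda>x. (a + b * vnorm x)^j) C m"
proof (cases j)
  case 0 then show ?thesis by (intro exI[of _ 0] exI[of _ 0]) (simp add: LL_def)
next
  case (Suc i)
  assume a: "0 \<le> a" and b: "0 \<le> b"
  have "LL k (\<lambda>x. (a + b * vnorm x)^(Suc i)) (real (Suc i) * b * (a+b)^i) i"
    by (rule LL_vnorm_comp) (use a b poly_lip in auto)
  then show ?thesis using Suc by blast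
qed

lemma LL_FIXPS:
  assumes L: "LL (a+b+d) f C m" and p: "length p = a" and q: "length q = d"
  shows "LL b (\<lambda>l. f (p@l@q)) (C*(1+2* vnorm p+2* vnorm q)^m) m"
proof (rule LLI)
  have C: "0 \<le> C" using LL_nonneg[OF L] .
  then show "0 \<le> C*(1+2* vnorm p+2* vnorm q)^m" by simp
  fix x y :: "real list" assume l: "length x = b" "length y = b"
  have "\<bar>f (p@x@q) - f (p@y@q)\<bar> \<le> C * (1 + vnorm (p@x@q) + vnorm (p@y@q))^m * vdist (p@x@q) (p@y@q)"
    using LLD[OF L] l p q by simp
  also have "vdist (p@x@q) (p@y@q) = vdist x y"
    using l by (simp add: vdist_append_same_left vdist_append_same_right)
  also have "(1 + vnorm (p@x@q) + vnorm (p@y@q)) \<le> (1+2* vnorm p+2* vnorm q) * (1 + vnorm x + vnorm y)"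
  proof -
    have "vnorm (p@x@q) \<le> vnorm p + (vnorm x + vnorm q)"
      by (meson add_left_mono order_trans vnorm_append_le)
    moreover have "vnorm (p@y@q) \<le> vnorm p + (vnorm y + vnorm q)"
      by (meson add_left_mono order_trans vnorm_append_le)
    moreover have "0 \<le> vnorm p * vnorm x" "0 \<le> vnorm p * vnorm y" "0 \<le> vnorm q * vnorm x" "0 \<le> vnorm q * vnorm y"
      by auto
    moreover have "(1+2 * vnorm p+2 * vnorm q) * (1 + vnorm x + vnorm y) = 1 + vnorm x + vnorm y + 2 * vnorm p + 2 * vnorm q
       + 2*(vnorm p * vnorm x) + 2*(vnorm p * vnorm y) + 2*(vnorm q * vnorm x) + 2*(vnorm q * vnorm y)"
      by (simp add: algebra_simps)
    moreover have "0 \<le> vnorm p" "0 \<le> vnorm q" by auto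
    ultimately show ?thesis by linarith
  qed
  then have "(1 + vnorm (p@x@q) + vnorm (p@y@q))^m \<le> ((1+2* vnorm p+2* vnorm q) * (1 + vnorm x + vnorm y))^m"
    by (intro power_mono) (auto intro: add_nonneg_nonneg)
  then have "C * (1 + vnorm (p@x@q) + vnorm (p@y@q))^m * vdist x y \<le> C * ((1+2* vnorm p+2* vnorm q) * (1 + vnorm x + vnorm y))^m * vdist x y"
    using C by (intro mult_right_mono mult_left_mono) auto
  also have "\<dots> = C*(1+2* vnorm p+2* vnorm q)^m * (1 + vnorm x + vnorm y)^m * vdist x y"
    by (simp add: power_mult_distrib)
  finally show "\<bar>f (p@x@q) - f (p@y@q)\<bar> \<le> C*(1+2* vnorm p+2* vnorm q)^m * (1 + vnorm x + vnorm y)^m * vdist x y" .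
qed

lemma LL_COMP:
  assumes L: "LL b \<phi> C m" and len: "\<And>x. length x = a \<Longrightarrow> length (T x) = b" and K: "0 \<le> K"
    and nT: "\<And>x. length x = a \<Longrightarrow> vnorm (T x) \<le> K * (1 + vnorm x)^p"
    and dT: "\<And>x y. length x = a \<Longrightarrow> length y = a \<Longrightarrow> vdist (T x) (T y) \<le> K * (1 + vnorm x + vnorm y)^q * vdist x y"
  shows "LL a (\<lambda>x. \<phi> (T x)) (C * (1+2*K)^m * K) (p*m+q)"
proof (rule LLI)
  have C: "0 \<le> C" using LL_nonneg[OF L] .
  then show "0 \<le> C * (1+2*K)^m * K" using K by simp
  fix x y :: "real list" assume l: "length x = a" "length y = a"
  let ?s = "1 + vnorm x + vnorm y"
  have s1: "1 \<le> ?s" by (simp add: add_nonneg_nonneg)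
  have "\<bar>\<phi> (T x) - \<phi> (T y)\<bar> \<le> C * (1 + vnorm (T x) + vnorm (T y))^m * vdist (T x) (T y)"
    using LLD[OF L] len l by simp
  also have "1 + vnorm (T x) + vnorm (T y) \<le> (1+2*K) * ?s^p"
  proof -
    have "(1 + vnorm x)^p \<le> ?s^p" "(1 + vnorm y)^p \<le> ?s^p" by (intro power_mono; simp)+
    moreover have "1 \<le> ?s^p" using s1 by (rule one_le_power)
    moreover have "K*(1 + vnorm x)^p \<le> K*?s^p" "K*(1 + vnorm y)^p \<le> K*?s^p"
      using K by (intro mult_left_mono power_mono; simp)+
    moreover have "(1+2*K) * ?s^p = ?s^p + 2*(K*?s^p)" by (simp add: algebra_simps)
    moreover have "1 \<le> ?s^p" using s1 by (rule one_le_power)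
    ultimately have "1 + K*(1 + vnorm x)^p + K*(1 + vnorm y)^p \<le> (1+2*K) * ?s^p"
      by linarith
    then show ?thesis using nT[OF l(1)] nT[OF l(2)] by linarith
  qed
  then have "(1 + vnorm (T x) + vnorm (T y))^m \<le> ((1+2*K) * ?s^p)^m"
    by (intro power_mono) (auto intro: add_nonneg_nonneg)
  then have "C * (1 + vnorm (T x) + vnorm (T y))^m * vdist (T x) (T y) \<le> C * ((1+2*K) * ?s^p)^m * (K * ?s^q * vdist x y)"
    using C dT[OF l] K by (intro mult_mono mult_left_mono) (auto intro!: mult_nonneg_nonneg zero_le_power add_nonneg_nonneg)
  also have "\<dots> = (C * (1+2*K)^m * K) * ?s^(p*m+q) * vdist x y"
  proof -
    have "((1+2*K) * ?s^p)^m = (1+2*K)^m * ?s^(p*m)" by (simp add: power_mult_distrib power_mult)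
    moreover have "?s^(p*m+q) = ?s^(p*m) * ?s^q" by (simp add: power_add)
    ultimately show ?thesis by (simp add: ac_simps)
  qed
  finally show "\<bar>\<phi> (T x) - \<phi> (T y)\<bar> \<le> (C * (1+2*K)^m * K) * ?s^(p*m+q) * vdist x y" .
qed

lemma LL_hd: "LL 1 hd 1 0"
proof (rule LLI)
  fix x y :: "real list" assume "length x = 1" "length y = 1"
  then obtain a b where "x = [a]" "y = [b]" by (metis One_nat_def length_0_conv length_Suc_conv)
  then show "\<bar>hd x - hd y\<bar> \<le> 1 * (1 + vnorm x + vnorm y)^0 * vdist x y" by simp
qed simp

lemma LL_const: "LL k (\<lambda>_. c) 0 0" by (simp add: LL_def)



definition probs :: "'a measure set \<Rightarrow> bool" where
  "probs P \<longleftrightarrow> P \<noteq> {} \<and> (\<forall>Q\<in>P. prob_space Q)"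

definition good :: "'a measure set \<Rightarrow> ('a \<Rightarrow> real) \<Rightarrow> bool" where
  "good P X \<longleftrightarrow> (\<forall>Q\<in>P. integrable Q X) \<and> bdd_above ((\<lambda>Q. integral\<^sup>L Q X) ` P)"

lemma int_const_prob: assumes "prob_space Q" shows "integral\<^sup>L Q (\<lambda>_. c) = (c::real)"
  by (subst lebesgue_integral_const) (simp add: prob_space.prob_space[OF assms])

lemma sE_const: "probs P \<Longrightarrow> sE P (\<lambda>_. c) = c"
proof -
  assume p: "probs P"
  have "sE P (\<lambda>_. c) = (SUP Q\<in>P. c)" unfolding sE_def
    using p unfolding probs_def by (intro SUP_cong refl int_const_prob) auto
  then show ?thesis using p unfolding probs_def by simp
qed

lemma good_const: "probs P \<Longrightarrow> good P (\<lambda>_. c)"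
proof -
  assume p: "probs P"
  have "\<And>Q. Q \<in> P \<Longrightarrow> integral\<^sup>L Q (\<lambda>_. c) = c"
    using p unfolding probs_def by (intro int_const_prob) auto
  moreover have "\<And>Q. Q \<in> P \<Longrightarrow> integrable Q (\<lambda>_. c)"
    using p unfolding probs_def by (simp add: prob_space.finite_measure finite_measure.integrable_const)
  moreover have "bdd_above ((\<lambda>Q. integral\<^sup>L Q (\<lambda>_. c)) ` P)"
  proof (rule bdd_above_mono)
    show "(\<lambda>Q. integral\<^sup>L Q (\<lambda>_. c)) ` P \<subseteq> {c}" using calculation(1) by auto
  qed simp
  ultimately show ?thesis unfolding good_def by blast
qed

lemma sE_le_add:
  assumes p: "probs P" and A: "good P A" and B: "good P B" and F: "good P F" and c: "0 \<le> c"
    and le: "\<And>Q \<omega>. Q \<in> P \<Longrightarrow> \<omega> \<in> space Q \<Longrightarrow> A \<omega> \<le> B \<omega> + c * F \<omega>"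
  shows "sE P A \<le> sE P B + c * sE P F"
  unfolding sE_def
proof (rule cSUP_least)
  show "P \<noteq> {}" using p unfolding probs_def by blast
  fix Q assume Q: "Q \<in> P"
  have iA: "integrable Q A" and iB: "integrable Q B" and iF: "integrable Q F"
    using A B F Q unfolding good_def by auto
  have "integral\<^sup>L Q A \<le> integral\<^sup>L Q (\<lambda>\<omega>. B \<omega> + c * F \<omega>)"
    using iA iB iF le Q by (intro integral_mono) auto
  also have "\<dots> = integral\<^sup>L Q B + c * integral\<^sup>L Q F" using iB iF by simp
  also have "\<dots> \<le> (SUP Q\<in>P. integral\<^sup>L Q B) + c * (SUP Q\<in>P. integral\<^sup>L Q F)"
    using B F Q c unfolding good_def by (intro add_mono mult_left_mono cSUP_upper) auto
  finally show "integral\<^sup>L Q A \<le> (SUP Q\<in>P. integral\<^sup>L Q B) + c * (SUP Q\<in>P. integral\<^sup>L Q F)" .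
qed

lemma sE_mono:
  assumes p: "probs P" and A: "good P A" and B: "good P B"
    and le: "\<And>Q \<omega>. Q \<in> P \<Longrightarrow> \<omega> \<in> space Q \<Longrightarrow> A \<omega> \<le> B \<omega>"
  shows "sE P A \<le> sE P B"
  using sE_le_add[OF p A B good_const[OF p, of 0] order.refl] le sE_const[OF p, of 0] by simp

lemma sE_abs_diff:
  assumes p: "probs P" and A: "good P A" and B: "good P B" and F: "good P F" and c: "0 \<le> c"
    and le: "\<And>Q \<omega>. Q \<in> P \<Longrightarrow> \<omega> \<in> space Q \<Longrightarrow> \<bar>A \<omega> - B \<omega>\<bar> \<le> c * F \<omega>"
  shows "\<bar>sE P A - sE P B\<bar> \<le> c * sE P F"
proof -
  have "sE P A \<le> sE P B + c * sE P F"
    by (rule sE_le_add[OF p A B F c]) (use le in force)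
  moreover have "sE P B \<le> sE P A + c * sE P F"
    by (rule sE_le_add[OF p B A F c]) (use le in force)
  ultimately show ?thesis by linarith
qed

lemma good_bound:
  assumes p: "probs P" and F: "good P F" and m: "\<And>Q. Q \<in> P \<Longrightarrow> X \<in> borel_measurable Q"
    and le: "\<And>Q \<omega>. Q \<in> P \<Longrightarrow> \<omega> \<in> space Q \<Longrightarrow> \<bar>X \<omega>\<bar> \<le> F \<omega>"
  shows "good P X"
proof -
  have i: "integrable Q X" if Q: "Q \<in> P" for Q
  proof -
    have iF: "integrable Q F" using F Q unfolding good_def by auto
    have AE: "AE x in Q. norm (X x) \<le> norm (F x)"
      using le[OF Q] by (auto intro!: AE_I2) (smt (verit))
    show ?thesis by (rule Bochner_Integration.integrable_bound[OF iF m[OF Q] AE])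
  qed
  have "integral\<^sup>L Q X \<le> integral\<^sup>L Q F" if Q: "Q \<in> P" for Q
    using i[OF Q] F Q le[OF Q] unfolding good_def by (intro integral_mono) (auto simp: abs_le_iff)
  then have "integral\<^sup>L Q X \<le> (SUP Q\<in>P. integral\<^sup>L Q F)" if Q: "Q \<in> P" for Q
    using F Q unfolding good_def by (meson cSUP_upper order_trans that)
  then show ?thesis using i unfolding good_def bdd_above_def by blast
qed

lemma sE_singleton[simp]: "sE {Q} X = integral\<^sup>L Q X" unfolding sE_def by simp

lemma good_singleton: "good {Q} X \<longleftrightarrow> integrable Q X" unfolding good_def by simp

lemma probs_singleton: "prob_space Q \<Longrightarrow> probs {Q}" unfolding probs_def by simp

lemma sE_nonneg: "probs P \<Longrightarrow> good P X \<Longrightarrow> (\<And>Q \<omega>. Q \<in> P \<Longrightarrow> \<omega> \<in> space Q \<Longrightarrow> 0 \<le> X \<omega>) \<Longrightarrow> 0 \<le> sE P X"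
  using sE_mono[of P "\<lambda>_. 0" X] good_const sE_const by metis

lemma ss_probs: "sublinear_space M P H \<Longrightarrow> probs P"
  unfolding sublinear_space_def probs_def by auto

lemma ss_good: "sublinear_space M P H \<Longrightarrow> X \<in> H \<Longrightarrow> good P X"
  unfolding sublinear_space_def good_def by auto

lemma ss_space: "sublinear_space M P H \<Longrightarrow> Q \<in> P \<Longrightarrow> space Q = space M"
  unfolding sublinear_space_def by auto

lemma ss_const: "sublinear_space M P H \<Longrightarrow> (\<lambda>_. c) \<in> H"
  unfolding sublinear_space_def by auto

lemma ss_comp: "sublinear_space M P H \<Longrightarrow> set Xs \<subseteq> H \<Longrightarrow> lLip (length Xs) \<phi> \<Longrightarrow>
   (\<lambda>\<omega>. \<phi> (vals Xs \<omega>)) \<in> H"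
  unfolding sublinear_space_def vals_def by auto

lemma vals_append[simp]: "vals (Xs @ Ys) \<omega> = vals Xs \<omega> @ vals Ys \<omega>"
  by (simp add: vals_def)

lemma vals_single[simp]: "vals [Y] \<omega> = [Y \<omega>]" by (simp add: vals_def)

lemma vals_Nil[simp]: "vals [] \<omega> = []" by (simp add: vals_def)

lemma length_vals[simp]: "length (vals Xs \<omega>) = length Xs" by (simp add: vals_def)

lemma vals_consts[simp]: "vals (map (\<lambda>a _. a) c) \<omega> = c"
  by (induction c) (auto simp: vals_def)

lemma ss_comp_LL: "sublinear_space M P H \<Longrightarrow> set Xs \<subseteq> H \<Longrightarrow> LL (length Xs) \<phi> C m \<Longrightarrow>
   (\<lambda>\<omega>. \<phi> (vals Xs \<omega>)) \<in> H"
  using ss_comp LL_imp_lLip by blast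

lemma ss_comp_prefix:
  assumes ss: "sublinear_space M P H" and X: "set Xs \<subseteq> H" and L: "LL (length c + length Xs) \<phi> C m"
  shows "(\<lambda>\<omega>. \<phi> (c @ vals Xs \<omega>)) \<in> H"
proof -
  have "set (map (\<lambda>a _. a) c @ Xs) \<subseteq> H" using X ss_const[OF ss] by auto
  moreover have "LL (length (map (\<lambda>a _. a) c @ Xs)) \<phi> C m" using L by simp
  ultimately have "(\<lambda>\<omega>. \<phi> (vals (map (\<lambda>a _. a) c @ Xs) \<omega>)) \<in> H" by (rule ss_comp_LL[OF ss])
  then show ?thesis by simp
qed

definition lcont :: "nat \<Rightarrow> (real list \<Rightarrow> real) \<Rightarrow> bool" where
  "lcont k F \<longleftrightarrow> (\<forall>x. length x = k \<longrightarrow> (\<forall>e>0. \<exists>d>0. \<forall>y. length y = k \<longrightarrow> vdist x y < d \<longrightarrow> \<bar>F y - F x\<bar> < e))"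

lemma LL_lcont: assumes L: "LL k F C m" shows "lcont k F"
  unfolding lcont_def
proof (intro allI impI)
  fix x :: "real list" and e :: real assume lx: "length x = k" and e: "0 < e"
  have C: "0 \<le> C" using LL_nonneg[OF L] .
  define A where "A = C * (2 + 2 * vnorm x)^m"
  have A: "0 \<le> A" unfolding A_def using C by simp
  define d where "d = min 1 (e / (A + 1))"
  have d: "0 < d" unfolding d_def using A e by simp
  show "\<exists>d>0. \<forall>y. length y = k \<longrightarrow> vdist x y < d \<longrightarrow> \<bar>F y - F x\<bar> < e"
  proof (intro exI[of _ d] conjI allI impI d)
    fix y :: "real list" assume ly: "length y = k" and dy: "vdist x y < d"
    have "vnorm y \<le> vnorm x + vdist x y" using vnorm_diff_le[of x y] lx ly by linarith
    then have ny: "vnorm y \<le> vnorm x + 1" using dy unfolding d_def by linarith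
    have "\<bar>F y - F x\<bar> \<le> C * (1 + vnorm y + vnorm x)^m * vdist y x" using LLD[OF L ly lx] .
    also have "\<dots> \<le> C * (2 + 2 * vnorm x)^m * vdist y x"
      using C ny by (intro mult_right_mono mult_left_mono power_mono) auto
    also have "\<dots> = A * vdist x y" unfolding A_def by (simp add: vdist_sym)
    also have "\<dots> \<le> A * d" using A dy by (intro mult_left_mono) auto
    also have "\<dots> \<le> A * (e / (A + 1))" using A unfolding d_def by (intro mult_left_mono) auto
    also have "\<dots> < e"
    proof -
      have "A * (e / (A + 1)) = e * (A / (A + 1))" by simp
      also have "\<dots> < e * 1" using A e by (intro mult_strict_left_mono) auto
      finally show ?thesis by simp
    qed
    finally show "\<bar>F y - F x\<bar> < e" .
  qed
qed

lemma lcont_fix_last: "lcont (Suc k) F \<Longrightarrow> lcont k (\<lambda>l. F (l @ [a]))"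
  unfolding lcont_def
proof (intro allI impI)
  fix x :: "real list" and e :: real assume H: "\<forall>x. length x = Suc k \<longrightarrow> (\<forall>e>0. \<exists>d>0. \<forall>y. length y = Suc k \<longrightarrow> vdist x y < d \<longrightarrow> \<bar>F y - F x\<bar> < e)"
    and lx: "length x = k" and e: "0 < e"
  obtain d where d: "0 < d" and h: "\<And>y. length y = Suc k \<Longrightarrow> vdist (x@[a]) y < d \<Longrightarrow> \<bar>F y - F (x@[a])\<bar> < e"
    using H lx e by (metis length_append_singleton)
  show "\<exists>d>0. \<forall>y. length y = k \<longrightarrow> vdist x y < d \<longrightarrow> \<bar>F (y@[a]) - F (x@[a])\<bar> < e"
    using d h lx by (intro exI[of _ d]) (auto simp: vdist_append_same_right)
qed

lemma floor_approx: "\<bar>real_of_int \<lfloor>y * real (Suc N)\<rfloor> / real (Suc N) - y\<bar> \<le> 1 / real (Suc N)"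
proof -
  let ?n = "real (Suc N)"
  have n: "0 < ?n" by simp
  have a: "real_of_int \<lfloor>y * ?n\<rfloor> \<le> y * ?n" by (rule of_int_floor_le)
  have b: "y * ?n - 1 < real_of_int \<lfloor>y * ?n\<rfloor>" by linarith
  have c: "\<bar>real_of_int \<lfloor>y * ?n\<rfloor> - y * ?n\<bar> \<le> 1" using a b by linarith
  have "real_of_int \<lfloor>y * ?n\<rfloor> / ?n - y = (real_of_int \<lfloor>y * ?n\<rfloor> - y * ?n) / ?n"
    using n by (simp add: field_simps)
  then have "\<bar>real_of_int \<lfloor>y * ?n\<rfloor> / ?n - y\<bar> = \<bar>real_of_int \<lfloor>y * ?n\<rfloor> - y * ?n\<bar> / ?n"
    using n by simp
  also have "\<dots> \<le> 1 / ?n" using c n by (intro divide_right_mono) auto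
  finally show ?thesis .
qed

lemma meas_list:
  "\<forall>F. lcont k F \<longrightarrow> (\<forall>i<k. g i \<in> borel_measurable M) \<longrightarrow>
     (\<lambda>\<omega>. F (map (\<lambda>i. g i \<omega>) [0..<k])) \<in> borel_measurable M"
proof (induction k)
  case 0 then show ?case by simp
next
  case (Suc k)
  show ?case
  proof (intro allI impI)
    fix F assume F: "lcont (Suc k) F" and g: "\<forall>i<Suc k. g i \<in> borel_measurable M"
    define u where "u N \<omega> = F (map (\<lambda>i. g i \<omega>) [0..<k] @ [real_of_int \<lfloor>g k \<omega> * real (Suc N)\<rfloor> / real (Suc N)])" for N \<omega>
    have um: "u N \<in> borel_measurable M" for N
    proof -
      have fq: "(\<lambda>\<omega>. F (map (\<lambda>i. g i \<omega>) [0..<k] @ [real_of_int q / real (Suc N)])) \<in> borel_measurable M" for q :: int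
        using Suc.IH lcont_fix_last[OF F] g by auto
      have h: "(\<lambda>\<omega>. \<lfloor>g k \<omega> * real (Suc N)\<rfloor>) \<in> measurable M (count_space UNIV)"
      proof -
        have gk: "g k \<in> borel_measurable M" using g by simp
        show ?thesis using gk by measurable
      qed
      show ?thesis unfolding u_def
        using measurable_compose_countable[where f="\<lambda>q \<omega>. F (map (\<lambda>i. g i \<omega>) [0..<k] @ [real_of_int q / real (Suc N)])", OF fq h]
        by simp
    qed
    have lim: "(\<lambda>N. u N \<omega>) \<longlonglongrightarrow> F (map (\<lambda>i. g i \<omega>) [0..<Suc k])" for \<omega>
    proof (rule LIMSEQ_I)
      fix r :: real assume r: "0 < r"
      let ?x = "map (\<lambda>i. g i \<omega>) [0..<k] @ [g k \<omega>]"
      have lx: "length ?x = Suc k" by simp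
      obtain d where d: "0 < d" and h: "\<And>y. length y = Suc k \<Longrightarrow> vdist ?x y < d \<Longrightarrow> \<bar>F y - F ?x\<bar> < r"
        using F lx r unfolding lcont_def by metis
      obtain N0 where N0: "inverse (real (Suc N0)) < d" using reals_Archimedean[OF d] by blast
      show "\<exists>no. \<forall>n\<ge>no. norm (u n \<omega> - F (map (\<lambda>i. g i \<omega>) [0..<Suc k])) < r"
      proof (intro exI allI impI)
        fix n assume n: "N0 \<le> n"
        have "vdist ?x (map (\<lambda>i. g i \<omega>) [0..<k] @ [real_of_int \<lfloor>g k \<omega> * real (Suc n)\<rfloor> / real (Suc n)])
              = \<bar>g k \<omega> - real_of_int \<lfloor>g k \<omega> * real (Suc n)\<rfloor> / real (Suc n)\<bar>"
          by (simp add: vdist_append_same_left)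
        also have "\<dots> \<le> 1 / real (Suc n)" using floor_approx[of "g k \<omega>" n] by (simp add: abs_minus_commute)
        also have "\<dots> \<le> inverse (real (Suc N0))" using n by (simp add: divide_inverse le_imp_inverse_le)
        finally have "vdist ?x (map (\<lambda>i. g i \<omega>) [0..<k] @ [real_of_int \<lfloor>g k \<omega> * real (Suc n)\<rfloor> / real (Suc n)]) < d"
          using N0 by linarith
        then show "norm (u n \<omega> - F (map (\<lambda>i. g i \<omega>) [0..<Suc k])) < r"
          using h[of "map (\<lambda>i. g i \<omega>) [0..<k] @ [real_of_int \<lfloor>g k \<omega> * real (Suc n)\<rfloor> / real (Suc n)]"]
          unfolding u_def by simp
      qed
    qed
    show "(\<lambda>\<omega>. F (map (\<lambda>i. g i \<omega>) [0..<Suc k])) \<in> borel_measurable M"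
      by (rule borel_measurable_LIMSEQ_real[where u=u]) (use lim um in auto)
  qed
qed

lemma meas_list_LL:
  "LL k F C m \<Longrightarrow> (\<And>i. i < k \<Longrightarrow> g i \<in> borel_measurable M) \<Longrightarrow>
     (\<lambda>\<omega>. F (map (\<lambda>i. g i \<omega>) [0..<k])) \<in> borel_measurable M"
  using meas_list LL_lcont by blast



lemma LL_add_const: "LL k f C m \<Longrightarrow> LL k (\<lambda>x. f x + a) C m"
  unfolding LL_def by simp

lemma LL_vnorm_pow: "\<exists>C m. LL k (\<lambda>x. vnorm x ^ j) C m"
  using LL_vnorm_poly[of 0 1 k j] by simp

lemma LL_vnorm_1p2: "\<exists>C m'. LL k (\<lambda>x. (1 + 2 * vnorm x) ^ m) C m'"
  using LL_vnorm_poly[of 1 2 k m] by simp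

lemma sum_pow_le: "0 \<le> a \<Longrightarrow> 0 \<le> (b::real) \<Longrightarrow> (a + b)^j \<le> 2^j * a^j + 2^j * b^j"
proof -
  assume a: "0 \<le> a" and b: "0 \<le> b"
  have "(a+b)^j \<le> (2 * max a b)^j" using a b by (intro power_mono) auto
  also have "\<dots> = 2^j * (max a b)^j" by (simp add: power_mult_distrib)
  also have "(max a b)^j \<le> a^j + b^j" using a b by (cases "a \<le> b") (auto simp: max_def)
  then have "2^j * (max a b)^j \<le> 2^j * (a^j + b^j)" by simp
  finally show ?thesis by (simp add: algebra_simps)
qed

lemma good_add_const: assumes p: "probs P" and B: "good P B" shows "good P (\<lambda>\<omega>. B \<omega> + a)"
proof -
  have i: "integrable Q (\<lambda>\<omega>. B \<omega> + a)" if "Q \<in> P" for Q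
    using B p that unfolding good_def probs_def
    by (auto intro!: Bochner_Integration.integrable_add finite_measure.integrable_const prob_space.finite_measure)
  have e: "integral\<^sup>L Q (\<lambda>\<omega>. B \<omega> + a) = integral\<^sup>L Q B + a" if "Q \<in> P" for Q
  proof -
    have ps: "prob_space Q" using p that unfolding probs_def by auto
    have iB: "integrable Q B" using B that unfolding good_def by auto
    have ic: "integrable Q (\<lambda>_. a)" using ps by (simp add: prob_space.finite_measure finite_measure.integrable_const)
    show ?thesis using Bochner_Integration.integral_add[OF iB ic] int_const_prob[OF ps] by simp
  qed
  obtain U where U: "\<And>Q. Q \<in> P \<Longrightarrow> integral\<^sup>L Q B \<le> U" using B unfolding good_def bdd_above_def by auto
  have "bdd_above ((\<lambda>Q. integral\<^sup>L Q (\<lambda>\<omega>. B \<omega> + a)) ` P)"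
    unfolding bdd_above_def using e U by (intro exI[of _ "U + a"]) auto
  then show ?thesis using i unfolding good_def by blast
qed

lemma sE_add_const: assumes p: "probs P" and B: "good P B" shows "sE P (\<lambda>\<omega>. B \<omega> + a) = sE P B + a"
proof -
  have g: "good P (\<lambda>\<omega>. B \<omega> + a)" by (rule good_add_const[OF p B])
  have 1: "sE P (\<lambda>\<omega>. B \<omega> + a) \<le> sE P B + 1 * sE P (\<lambda>_. a)"
    by (rule sE_le_add[OF p g B good_const[OF p]]) auto
  have 2: "sE P B \<le> sE P (\<lambda>\<omega>. B \<omega> + a) + 1 * sE P (\<lambda>_. -a)"
    by (rule sE_le_add[OF p B g good_const[OF p]]) auto
  show ?thesis using 1 2 sE_const[OF p] by simp
qed

lemma LL_sE_last:
  assumes p: "probs P" and L: "LL (Suc k) f C m"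
    and gf: "\<And>c. length c = k \<Longrightarrow> good P (\<lambda>\<omega>. f (c @ [Y \<omega>]))"
    and gY: "good P (\<lambda>\<omega>. (1 + 2 * \<bar>Y \<omega>\<bar>)^m)"
  shows "LL k (\<lambda>c. sE P (\<lambda>\<omega>. f (c @ [Y \<omega>]))) (C * sE P (\<lambda>\<omega>. (1 + 2 * \<bar>Y \<omega>\<bar>)^m)) m"
proof (rule LLI)
  have C: "0 \<le> C" using LL_nonneg[OF L] .
  have S: "0 \<le> sE P (\<lambda>\<omega>. (1 + 2 * \<bar>Y \<omega>\<bar>)^m)" by (rule sE_nonneg[OF p gY]) simp
  show "0 \<le> C * sE P (\<lambda>\<omega>. (1 + 2 * \<bar>Y \<omega>\<bar>)^m)" using C S by simp
  fix x y :: "real list" assume lx: "length x = k" and ly: "length y = k"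
  let ?c = "C * (1 + vnorm x + vnorm y)^m * vdist x y"
  have "\<bar>sE P (\<lambda>\<omega>. f (x @ [Y \<omega>])) - sE P (\<lambda>\<omega>. f (y @ [Y \<omega>]))\<bar> \<le> ?c * sE P (\<lambda>\<omega>. (1 + 2 * \<bar>Y \<omega>\<bar>)^m)"
  proof (rule sE_abs_diff[OF p gf[OF lx] gf[OF ly] gY])
    show "0 \<le> ?c" using C by simp
    fix Q \<omega>
    let ?t = "Y \<omega>"
    have "\<bar>f (x @ [?t]) - f (y @ [?t])\<bar> \<le> C * (1 + vnorm (x@[?t]) + vnorm (y@[?t]))^m * vdist (x@[?t]) (y@[?t])"
      using LLD[OF L] lx ly by simp
    also have "vdist (x@[?t]) (y@[?t]) = vdist x y" using lx ly by (simp add: vdist_append_same_right)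
    also have "(1 + vnorm (x@[?t]) + vnorm (y@[?t])) \<le> (1 + vnorm x + vnorm y) * (1 + 2 * \<bar>?t\<bar>)"
    proof -
      have "vnorm (x@[?t]) \<le> vnorm x + \<bar>?t\<bar>" using vnorm_append_le[of x "[?t]"] by simp
      moreover have "vnorm (y@[?t]) \<le> vnorm y + \<bar>?t\<bar>" using vnorm_append_le[of y "[?t]"] by simp
      moreover have "(1 + vnorm x + vnorm y) * (1 + 2 * \<bar>?t\<bar>) = 1 + vnorm x + vnorm y + 2 * \<bar>?t\<bar>
          + 2 * (vnorm x * \<bar>?t\<bar>) + 2 * (vnorm y * \<bar>?t\<bar>)" by (simp add: algebra_simps)
      moreover have "0 \<le> vnorm x * \<bar>?t\<bar>" "0 \<le> vnorm y * \<bar>?t\<bar>" by auto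
      ultimately show ?thesis by linarith
    qed
    then have "(1 + vnorm (x@[?t]) + vnorm (y@[?t]))^m \<le> ((1 + vnorm x + vnorm y) * (1 + 2 * \<bar>?t\<bar>))^m"
      by (intro power_mono) (auto intro: add_nonneg_nonneg)
    then have "C * (1 + vnorm (x@[?t]) + vnorm (y@[?t]))^m * vdist x y \<le> C * ((1 + vnorm x + vnorm y) * (1 + 2 * \<bar>?t\<bar>))^m * vdist x y"
      using C by (intro mult_right_mono mult_left_mono) auto
    also have "\<dots> = ?c * (1 + 2 * \<bar>?t\<bar>)^m" by (simp add: power_mult_distrib)
    finally show "\<bar>f (x @ [Y \<omega>]) - f (y @ [Y \<omega>])\<bar> \<le> ?c * (1 + 2 * \<bar>Y \<omega>\<bar>)^m" .
  qed
  then show "\<bar>sE P (\<lambda>\<omega>. f (x @ [Y \<omega>])) - sE P (\<lambda>\<omega>. f (y @ [Y \<omega>]))\<bar>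
      \<le> C * sE P (\<lambda>\<omega>. (1 + 2 * \<bar>Y \<omega>\<bar>)^m) * (1 + vnorm x + vnorm y)^m * vdist x y"
    by (simp add: ac_simps)
qed

definition clp :: "real \<Rightarrow> real \<Rightarrow> real" where "clp R t = max (-R) (min R t)"
definition pR :: "real \<Rightarrow> real list \<Rightarrow> real list" where "pR R x = map (clp R) x"

lemma clp_lip: "0 \<le> R \<Longrightarrow> \<bar>clp R a - clp R b\<bar> \<le> \<bar>a - b\<bar>" unfolding clp_def by auto
lemma clp_abs: "0 \<le> R \<Longrightarrow> \<bar>clp R a\<bar> \<le> R" unfolding clp_def by auto
lemma clp_abs2: "0 \<le> R \<Longrightarrow> \<bar>clp R a\<bar> \<le> \<bar>a\<bar>" unfolding clp_def by auto
lemma clp_id: "\<bar>a\<bar> \<le> R \<Longrightarrow> clp R a = a" unfolding clp_def by auto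
lemma clp_diff: "0 \<le> R \<Longrightarrow> \<bar>a - clp R a\<bar> \<le> \<bar>a\<bar>" unfolding clp_def by auto

lemma length_pR[simp]: "length (pR R x) = length x" by (simp add: pR_def)

lemma pR_dist: assumes R: "0 \<le> R" shows "length x = length y \<Longrightarrow> vdist (pR R x) (pR R y) \<le> vdist x y"
proof (induction x y rule: list_induct2)
  case Nil then show ?case by (simp add: pR_def)
next
  case (Cons a x b y)
  have "vdist (pR R (a#x)) (pR R (b#y)) = sqrt ((clp R a - clp R b)^2 + (vdist (pR R x) (pR R y))^2)"
    by (simp add: pR_def vdist_Cons)
  also have "\<dots> \<le> sqrt ((a - b)^2 + (vdist x y)^2)"
  proof (intro real_sqrt_le_mono add_mono)
    show "(clp R a - clp R b)^2 \<le> (a - b)^2"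
      using clp_lip[OF R, of a b] by (metis abs_ge_zero power2_abs power_mono)
    show "(vdist (pR R x) (pR R y))^2 \<le> (vdist x y)^2" using Cons.IH by (intro power_mono) auto
  qed
  also have "\<dots> = vdist (a#x) (b#y)" by (simp add: vdist_Cons)
  finally show ?case .
qed

lemma pR_norm_le: assumes R: "0 \<le> R" shows "vnorm (pR R x) \<le> vnorm x"
proof (induction x)
  case (Cons a x)
  have "vnorm (pR R (a#x)) = sqrt ((clp R a)^2 + (vnorm (pR R x))^2)" by (simp add: pR_def vnorm_Cons)
  also have "\<dots> \<le> sqrt (a^2 + (vnorm x)^2)"
  proof (intro real_sqrt_le_mono add_mono)
    show "(clp R a)^2 \<le> a^2" using clp_abs2[OF R, of a] by (metis abs_ge_zero power2_abs power_mono)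
    show "(vnorm (pR R x))^2 \<le> (vnorm x)^2" using Cons.IH by (intro power_mono) auto
  qed
  also have "\<dots> = vnorm (a#x)" by (simp add: vnorm_Cons)
  finally show ?case .
qed (simp add: pR_def)

lemma pR_norm_bound: assumes R: "0 \<le> R" shows "vnorm (pR R x) \<le> real (length x) * R"
proof -
  have "vnorm (pR R x) \<le> (\<Sum>t\<leftarrow>pR R x. \<bar>t\<bar>)" by (rule vnorm_le_sum_abs)
  also have "\<dots> \<le> real (length x) * R"
    by (induction x) (auto simp: pR_def algebra_simps intro: add_mono clp_abs[OF R])
  finally show ?thesis .
qed

lemma pR_id: assumes "vnorm x \<le> R" shows "pR R x = x"
  unfolding pR_def
proof (rule map_idI)
  fix t assume "t \<in> set x"
  then obtain i where "i < length x" "x!i = t" by (metis in_set_conv_nth)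
  then have "\<bar>t\<bar> \<le> R" using abs_nth_le_vnorm[of i x] assms by simp
  then show "clp R t = t" by (rule clp_id)
qed

lemma pR_dist_self: assumes R: "0 \<le> R" shows "vdist x (pR R x) \<le> vnorm x"
proof (induction x)
  case (Cons a x)
  have "vdist (a#x) (pR R (a#x)) = sqrt ((a - clp R a)^2 + (vdist x (pR R x))^2)"
    by (simp add: pR_def vdist_Cons)
  also have "\<dots> \<le> sqrt (a^2 + (vnorm x)^2)"
  proof (intro real_sqrt_le_mono add_mono)
    show "(a - clp R a)^2 \<le> a^2" using clp_diff[OF R, of a] by (metis abs_ge_zero power2_abs power_mono)
    show "(vdist x (pR R x))^2 \<le> (vnorm x)^2" using Cons.IH by (intro power_mono) auto
  qed
  also have "\<dots> = vnorm (a#x)" by (simp add: vnorm_Cons)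
  finally show ?case .
qed (simp add: pR_def vdist_def)

lemma pR_LL:
  assumes L: "LL k \<psi> C m" and R: "0 \<le> R"
  shows "LL k (\<lambda>x. \<psi> (pR R x)) (C * (1 + 2 * (real k * R))^m) 0"
proof (rule LLI)
  have C: "0 \<le> C" using LL_nonneg[OF L] .
  then show "0 \<le> C * (1 + 2 * (real k * R))^m" using R by simp
  fix x y :: "real list" assume lx: "length x = k" and ly: "length y = k"
  have "\<bar>\<psi> (pR R x) - \<psi> (pR R y)\<bar> \<le> C * (1 + vnorm (pR R x) + vnorm (pR R y))^m * vdist (pR R x) (pR R y)"
    using LLD[OF L] lx ly by simp
  also have "\<dots> \<le> C * (1 + 2 * (real k * R))^m * vdist x y"
  proof (intro mult_mono mult_left_mono power_mono)
    show "1 + vnorm (pR R x) + vnorm (pR R y) \<le> 1 + 2 * (real k * R)"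
      using pR_norm_bound[OF R, of x] pR_norm_bound[OF R, of y] lx ly by simp
    show "vdist (pR R x) (pR R y) \<le> vdist x y" using pR_dist[OF R] lx ly by simp
  qed (use C R in auto)
  finally show "\<bar>\<psi> (pR R x) - \<psi> (pR R y)\<bar> \<le> C * (1 + 2 * (real k * R))^m * (1 + vnorm x + vnorm y)^0 * vdist x y"
    by simp
qed

lemma pR_bLip:
  assumes L: "LL k \<psi> C m" and R: "0 \<le> R"
  shows "bLip k (\<lambda>x. \<psi> (pR R x))"
  unfolding bLip_def
proof (intro conjI)
  have C: "0 \<le> C" using LL_nonneg[OF L] .
  show "\<exists>B. \<forall>x. length x = k \<longrightarrow> \<bar>\<psi> (pR R x)\<bar> \<le> B"
  proof (intro exI allI impI)
    fix x :: "real list" assume lx: "length x = k"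
    have "\<bar>\<psi> (pR R x)\<bar> \<le> \<bar>\<psi> (replicate k 0)\<bar> + C * (1 + vnorm (pR R x))^m * vnorm (pR R x)"
      using LL_growth[OF L] lx by simp
    also have "\<dots> \<le> \<bar>\<psi> (replicate k 0)\<bar> + C * (1 + real k * R)^m * (real k * R)"
      using pR_norm_bound[OF R, of x] lx C R by (intro add_left_mono mult_mono mult_left_mono power_mono) auto
    finally show "\<bar>\<psi> (pR R x)\<bar> \<le> \<bar>\<psi> (replicate k 0)\<bar> + C * (1 + real k * R)^m * (real k * R)" .
  qed
  show "\<exists>La. \<forall>x y. length x = k \<longrightarrow> length y = k \<longrightarrow> \<bar>\<psi> (pR R x) - \<psi> (pR R y)\<bar> \<le> La * vdist x y"
    using LLD[OF pR_LL[OF L R]] by (intro exI[of _ "C * (1 + 2 * (real k * R))^m"]) simp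
qed

lemma pR_err:
  assumes L: "LL k \<psi> C m" and R: "1 \<le> R" and lx: "length x = k"
  shows "\<bar>\<psi> x - \<psi> (pR R x)\<bar> \<le> (C * 3^m / R) * vnorm x ^ (m+2)"
proof (cases "vnorm x \<le> R")
  case True
  then have "pR R x = x" by (rule pR_id)
  then show ?thesis using R LL_nonneg[OF L] by simp
next
  case False
  have C: "0 \<le> C" using LL_nonneg[OF L] .
  let ?n = "vnorm x"
  have n1: "1 \<le> ?n" using False R by linarith
  have "\<bar>\<psi> x - \<psi> (pR R x)\<bar> \<le> C * (1 + ?n + vnorm (pR R x))^m * vdist x (pR R x)"
    using LLD[OF L] lx by simp
  also have "\<dots> \<le> C * (3 * ?n)^m * ?n"
    using pR_norm_le[of R x] pR_dist_self[of R x] R n1 C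
    by (intro mult_mono mult_left_mono power_mono) auto
  also have "\<dots> = C * 3^m * ?n^(m+1)" by (simp add: power_mult_distrib)
  also have "\<dots> \<le> C * 3^m * (?n^(m+1) * (?n / R))"
  proof -
    have "1 \<le> ?n / R" using False R by simp
    then have "?n^(m+1) * 1 \<le> ?n^(m+1) * (?n / R)" by (intro mult_left_mono) auto
    then have "?n^(m+1) \<le> ?n^(m+1) * (?n / R)" by simp
    then show ?thesis using C by (intro mult_left_mono) auto
  qed
  also have "\<dots> = (C * 3^m / R) * ?n^(m+2)" by (simp add: field_simps)
  finally show ?thesis .
qed

lemma zero_if_small: assumes "\<And>R::real. 1 \<le> R \<Longrightarrow> \<bar>d\<bar> \<le> A / R" shows "d = (0::real)"
proof (rule ccontr)
  assume d: "d \<noteq> 0"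
  define R where "R = max 1 ((\<bar>A\<bar> + 1) / \<bar>d\<bar>)"
  have R1: "1 \<le> R" unfolding R_def by simp
  have Rp: "0 < R" using R1 by simp
  have "(\<bar>A\<bar> + 1) / \<bar>d\<bar> \<le> R" unfolding R_def by simp
  then have "\<bar>A\<bar> + 1 \<le> R * \<bar>d\<bar>" using d by (simp add: field_simps)
  moreover have "\<bar>d\<bar> * R \<le> A" using assms[OF R1] Rp by (simp add: field_simps)
  ultimately show False by (simp add: algebra_simps)
qed



lemma indep_ext:
  assumes ss: "sublinear_space M P H" and X: "set Xs \<subseteq> H" and Y: "Y \<in> H"
    and ind: "indep_of P Xs Y" and L: "LL (Suc (length Xs)) \<psi> C m"
  shows "sE P (\<lambda>\<omega>. \<psi> (vals Xs \<omega> @ [Y \<omega>])) = sE P (\<lambda>\<omega>. sE P (\<lambda>\<omega>'. \<psi> (vals Xs \<omega> @ [Y \<omega>'])))"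
proof -
  define k where "k = length Xs"
  have p: "probs P" by (rule ss_probs[OF ss])
  have C: "0 \<le> C" using LL_nonneg[OF L] .
  have XY: "set (Xs @ [Y]) \<subseteq> H" using X Y by auto
  have YY: "set [Y] \<subseteq> H" using Y by auto
  define j where "j = m + 2"
  define Kc where "Kc = C * 3^m"
  have Kc: "0 \<le> Kc" unfolding Kc_def using C by simp
  have LK: "LL (length (Xs @ [Y])) \<psi> C m" using L by simp
  have gen: "good P (\<lambda>\<omega>. f (vals Xs' \<omega>))" if "LL (length Xs') f c' m'" "set Xs' \<subseteq> H" for f Xs' c' m'
    using ss_good[OF ss ss_comp_LL[OF ss that(2) that(1)]] .
  have genp: "good P (\<lambda>\<omega>. f (c @ [Y \<omega>]))" if "LL (length c + 1) f c' m'" for f c c' m'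
  proof -
    have "LL (length c + length [Y]) f c' m'" using that by simp
    then show ?thesis using ss_good[OF ss ss_comp_prefix[OF ss YY]] by simp
  qed
  obtain Cn1 mn1 where Ln1: "LL (Suc k) (\<lambda>x. vnorm x ^ j) Cn1 mn1" using LL_vnorm_pow by blast
  obtain Cn2 mn2 where Ln2: "LL k (\<lambda>x. vnorm x ^ j) Cn2 mn2" using LL_vnorm_pow by blast
  obtain Cn3 mn3 where Ln3: "LL 1 (\<lambda>x. vnorm x ^ j) Cn3 mn3" using LL_vnorm_pow by blast
  obtain C2 m2 where L2: "LL 1 (\<lambda>x. (1 + 2 * vnorm x)^m) C2 m2" using LL_vnorm_1p2 by blast
  have gPsi: "good P (\<lambda>\<omega>. \<psi> (vals Xs \<omega> @ [Y \<omega>]))" using gen[OF LK XY] by simp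
  have gPsiR: "good P (\<lambda>\<omega>. \<psi> (pR R (vals Xs \<omega> @ [Y \<omega>])))" if "0 \<le> R" for R
    using gen[OF pR_LL[OF LK that] XY] by simp
  have gN: "good P (\<lambda>\<omega>. vnorm (vals Xs \<omega> @ [Y \<omega>]) ^ j)" using gen[of "Xs @ [Y]", OF _ XY] Ln1 k_def by simp
  have gNX: "good P (\<lambda>\<omega>. vnorm (vals Xs \<omega>) ^ j)" using gen[of Xs, OF _ X] Ln2 k_def by simp
  have gY1: "good P (\<lambda>\<omega>. (1 + 2 * \<bar>Y \<omega>\<bar>)^m)" using gen[of "[Y]" "\<lambda>x. (1 + 2 * vnorm x)^m", OF _ YY] L2 by simp
  have gYj: "good P (\<lambda>\<omega>. \<bar>Y \<omega>\<bar>^j)" using gen[of "[Y]" "\<lambda>x. vnorm x ^ j", OF _ YY] Ln3 by simp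
  have gc: "good P (\<lambda>\<omega>. \<psi> (c @ [Y \<omega>]))" if "length c = k" for c
    using genp[of c \<psi>] L that unfolding k_def by simp
  have gcR: "good P (\<lambda>\<omega>. \<psi> (pR R (c @ [Y \<omega>])))" if "length c = k" "0 \<le> R" for c R
    using genp[of c "\<lambda>x. \<psi> (pR R x)"] pR_LL[OF L that(2)] that unfolding k_def by simp
  have gcN: "good P (\<lambda>\<omega>. vnorm (c @ [Y \<omega>]) ^ j)" if "length c = k" for c
    using genp[of c "\<lambda>x. vnorm x ^ j"] Ln1 that by simp
  define h where "h c = sE P (\<lambda>\<omega>'. \<psi> (c @ [Y \<omega>']))" for c
  define hR where "hR R c = sE P (\<lambda>\<omega>'. \<psi> (pR R (c @ [Y \<omega>'])))" for R c
  have Lh: "LL k h (C * sE P (\<lambda>\<omega>. (1 + 2 * \<bar>Y \<omega>\<bar>)^m)) m"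
    unfolding h_def
  proof (rule LL_sE_last[OF p])
    show "LL (Suc k) \<psi> C m" using L k_def by simp
  qed (use gc gY1 in auto)
  have LhR: "LL k (hR R) (C * (1 + 2 * (real (Suc k) * R))^m * sE P (\<lambda>\<omega>. (1 + 2 * \<bar>Y \<omega>\<bar>)^0)) 0"
    if R: "0 \<le> R" for R
    unfolding hR_def
  proof (rule LL_sE_last[OF p])
    show "LL (Suc k) (\<lambda>x. \<psi> (pR R x)) (C * (1 + 2 * (real (Suc k) * R)) ^ m) 0"
      using pR_LL[OF L R] k_def by simp
    show "\<And>c. length c = k \<Longrightarrow> good P (\<lambda>\<omega>. \<psi> (pR R (c @ [Y \<omega>])))" using gcR R by blast
    show "good P (\<lambda>\<omega>. (1 + 2 * \<bar>Y \<omega>\<bar>) ^ 0)" using good_const[OF p, of 1] by simp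
  qed
  have gh: "good P (\<lambda>\<omega>. h (vals Xs \<omega>))" using gen[of Xs h] Lh X k_def by simp
  have ghR: "good P (\<lambda>\<omega>. hR R (vals Xs \<omega>))" if "0 \<le> R" for R
    using gen[of Xs "hR R"] LhR[OF that] X k_def by simp
  define S where "S = sE P (\<lambda>\<omega>. \<bar>Y \<omega>\<bar>^j)"
  define NZ where "NZ = sE P (\<lambda>\<omega>. vnorm (vals Xs \<omega> @ [Y \<omega>]) ^ j)"
  define NX where "NX = sE P (\<lambda>\<omega>. vnorm (vals Xs \<omega>) ^ j)"
  have pe: "\<bar>\<psi> x - \<psi> (pR R x)\<bar> \<le> (Kc / R) * vnorm x ^ j" if R: "1 \<le> R" and lx: "length x = Suc k" for R x
    using pR_err[OF L R] lx unfolding Kc_def j_def k_def by simp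
  have claimA: "\<bar>sE P (\<lambda>\<omega>. \<psi> (vals Xs \<omega> @ [Y \<omega>])) - sE P (\<lambda>\<omega>. \<psi> (pR R (vals Xs \<omega> @ [Y \<omega>])))\<bar> \<le> (Kc / R) * NZ"
    if R: "1 \<le> R" for R
    unfolding NZ_def
  proof (rule sE_abs_diff[OF p gPsi gPsiR gN])
    show "0 \<le> Kc / R" using Kc R by simp
    fix Q \<omega>
    show "\<bar>\<psi> (vals Xs \<omega> @ [Y \<omega>]) - \<psi> (pR R (vals Xs \<omega> @ [Y \<omega>]))\<bar> \<le> Kc / R * vnorm (vals Xs \<omega> @ [Y \<omega>]) ^ j"
      using pe[OF R, of "vals Xs \<omega> @ [Y \<omega>]"] k_def by simp
  qed (use R in simp)
  have claimB: "\<bar>h c - hR R c\<bar> \<le> (Kc / R) * (2^j * vnorm c ^ j + 2^j * S)"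
    if R: "1 \<le> R" and lc: "length c = k" for R c
  proof -
    have R0: "0 \<le> R" using R by simp
    have "\<bar>h c - hR R c\<bar> \<le> (Kc / R) * sE P (\<lambda>\<omega>. vnorm (c @ [Y \<omega>]) ^ j)"
      unfolding h_def hR_def
    proof (rule sE_abs_diff[OF p gc[OF lc] gcR[OF lc R0] gcN[OF lc]])
      show "0 \<le> Kc / R" using Kc R by simp
      fix Q \<omega>
      show "\<bar>\<psi> (c @ [Y \<omega>]) - \<psi> (pR R (c @ [Y \<omega>]))\<bar> \<le> Kc / R * vnorm (c @ [Y \<omega>]) ^ j"
        using pe[OF R, of "c @ [Y \<omega>]"] lc by simp
    qed
    also have "sE P (\<lambda>\<omega>. vnorm (c @ [Y \<omega>]) ^ j) \<le> sE P (\<lambda>_. 2^j * vnorm c ^ j) + 2^j * sE P (\<lambda>\<omega>. \<bar>Y \<omega>\<bar>^j)"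
    proof (rule sE_le_add[OF p gcN[OF lc] good_const[OF p] gYj])
      fix Q \<omega>
      have "vnorm (c @ [Y \<omega>]) ^ j \<le> (vnorm c + \<bar>Y \<omega>\<bar>)^j"
        using vnorm_append_le[of c "[Y \<omega>]"] by (intro power_mono) auto
      also have "\<dots> \<le> 2^j * vnorm c ^ j + 2^j * \<bar>Y \<omega>\<bar>^j" by (rule sum_pow_le) auto
      finally show "vnorm (c @ [Y \<omega>]) ^ j \<le> 2^j * vnorm c ^ j + 2^j * \<bar>Y \<omega>\<bar>^j" .
    qed simp
    then have "(Kc / R) * sE P (\<lambda>\<omega>. vnorm (c @ [Y \<omega>]) ^ j) \<le> (Kc / R) * (2^j * vnorm c ^ j + 2^j * S)"
      using Kc R0 sE_const[OF p] unfolding S_def by (intro mult_left_mono) auto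
    finally show ?thesis .
  qed
  have claimC: "\<bar>sE P (\<lambda>\<omega>. h (vals Xs \<omega>)) - sE P (\<lambda>\<omega>. hR R (vals Xs \<omega>))\<bar> \<le> (Kc * 2^j / R) * (S + NX)"
    if R: "1 \<le> R" for R
  proof -
    have R0: "0 \<le> R" using R by simp
    let ?a = "(Kc / R) * 2^j * S"
    let ?c = "Kc * 2^j / R"
    have c0: "0 \<le> ?c" using Kc R0 by simp
    have pw: "\<bar>h (vals Xs \<omega>) - hR R (vals Xs \<omega>)\<bar> \<le> ?a + ?c * vnorm (vals Xs \<omega>) ^ j" for \<omega>
      using claimB[OF R, of "vals Xs \<omega>"] k_def by (simp add: algebra_simps)
    have 1: "sE P (\<lambda>\<omega>. h (vals Xs \<omega>)) \<le> sE P (\<lambda>\<omega>. hR R (vals Xs \<omega>) + ?a) + ?c * NX"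
      unfolding NX_def
    proof (rule sE_le_add[OF p gh good_add_const[OF p ghR[OF R0]] gNX c0])
      fix Q \<omega> show "h (vals Xs \<omega>) \<le> hR R (vals Xs \<omega>) + ?a + ?c * vnorm (vals Xs \<omega>) ^ j"
        using pw[of \<omega>] by linarith
    qed
    have 2: "sE P (\<lambda>\<omega>. hR R (vals Xs \<omega>)) \<le> sE P (\<lambda>\<omega>. h (vals Xs \<omega>) + ?a) + ?c * NX"
      unfolding NX_def
    proof (rule sE_le_add[OF p ghR[OF R0] good_add_const[OF p gh] gNX c0])
      fix Q \<omega> show "hR R (vals Xs \<omega>) \<le> h (vals Xs \<omega>) + ?a + ?c * vnorm (vals Xs \<omega>) ^ j"
        using pw[of \<omega>] by linarith
    qed
    have e1: "sE P (\<lambda>\<omega>. hR R (vals Xs \<omega>) + ?a) = sE P (\<lambda>\<omega>. hR R (vals Xs \<omega>)) + ?a"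
      by (rule sE_add_const[OF p ghR[OF R0]])
    have e2: "sE P (\<lambda>\<omega>. h (vals Xs \<omega>) + ?a) = sE P (\<lambda>\<omega>. h (vals Xs \<omega>)) + ?a"
      by (rule sE_add_const[OF p gh])
    have "?a + ?c * NX = ?c * (S + NX)" by (simp add: algebra_simps add_divide_distrib)
    then show ?thesis using 1 2 e1 e2 by linarith
  qed
  have claimD: "sE P (\<lambda>\<omega>. \<psi> (pR R (vals Xs \<omega> @ [Y \<omega>]))) = sE P (\<lambda>\<omega>. hR R (vals Xs \<omega>))"
    if R: "0 \<le> R" for R
  proof -
    have "bLip (length Xs + 1) (\<lambda>x. \<psi> (pR R x))" using pR_bLip[OF L R] by simp
    then show ?thesis using ind unfolding indep_of_def hR_def by blast
  qed
  have fin: "\<bar>sE P (\<lambda>\<omega>. \<psi> (vals Xs \<omega> @ [Y \<omega>])) - sE P (\<lambda>\<omega>. h (vals Xs \<omega>))\<bar> \<le> (Kc * NZ + Kc * 2^j * (S + NX)) / R"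
    if R: "1 \<le> R" for R
  proof -
    have "(Kc / R) * NZ + (Kc * 2^j / R) * (S + NX) = (Kc * NZ + Kc * 2^j * (S + NX)) / R"
      by (simp add: add_divide_distrib algebra_simps)
    then show ?thesis using claimA[OF R] claimC[OF R] claimD[of R] R by linarith
  qed
  have "sE P (\<lambda>\<omega>. \<psi> (vals Xs \<omega> @ [Y \<omega>])) - sE P (\<lambda>\<omega>. h (vals Xs \<omega>)) = 0"
    by (rule zero_if_small[OF fin])
  then show ?thesis unfolding h_def by simp
qed



lemma G_prob: "prob_space std_gauss"
  unfolding std_gauss_def by (rule prob_space_normal_density) simp

lemma G_sets[simp, measurable_cong]: "sets std_gauss = sets borel"
  unfolding std_gauss_def by simp

lemma G_space[simp]: "space std_gauss = UNIV"
  unfolding std_gauss_def by simp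

lemma G_meas: "f \<in> borel_measurable borel \<Longrightarrow> f \<in> borel_measurable std_gauss"
  unfolding std_gauss_def by simp

lemma G_probs: "probs {std_gauss}" using G_prob by (rule probs_singleton)

lemma G_int_abs_pow: "integrable std_gauss (\<lambda>t. \<bar>t\<bar>^p)"
  unfolding std_gauss_def
  by (subst integrable_density) (auto simp: integrable_std_normal_moment_abs)

lemma G_int_const: "integrable std_gauss (\<lambda>t. c::real)"
  using G_prob by (simp add: prob_space.finite_measure finite_measure.integrable_const)

lemma G_int_poly: "integrable std_gauss (\<lambda>t. (1 + \<bar>t\<bar>)^p)"
proof -
  have i: "integrable std_gauss (\<lambda>t. 2^p * 1^p + 2^p * \<bar>t\<bar>^p)"
    using G_int_abs_pow G_int_const by auto
  show ?thesis
  proof (rule Bochner_Integration.integrable_bound[OF i])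
    show "(\<lambda>t. (1 + \<bar>t\<bar>)^p) \<in> borel_measurable std_gauss" by (intro G_meas) measurable
    show "AE x in std_gauss. norm ((1 + \<bar>x\<bar>)^p) \<le> norm (2^p * 1^p + 2^p * \<bar>x\<bar>^p)"
      using sum_pow_le[of 1] by (intro AE_I2) auto
  qed
qed

lemma G_int_bound:
  assumes m: "f \<in> borel_measurable borel" and b: "\<And>t. \<bar>f t\<bar> \<le> K * (1 + \<bar>t\<bar>)^p"
  shows "integrable std_gauss f"
proof (rule Bochner_Integration.integrable_bound)
  show "integrable std_gauss (\<lambda>t. K * (1 + \<bar>t\<bar>)^p)" using G_int_poly by simp
  show "f \<in> borel_measurable std_gauss" using m by (rule G_meas)
  show "AE x in std_gauss. norm (f x) \<le> norm (K * (1 + \<bar>x\<bar>)^p)"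
    using b by (intro AE_I2) (auto, smt (verit))
qed

lemma G_sym:
  fixes f :: "real \<Rightarrow> real"
  assumes m: "f \<in> borel_measurable borel"
  shows "(\<integral>t. f (- t) \<partial>std_gauss) = (\<integral>t. f t \<partial>std_gauss)"
proof -
  have m2: "(\<lambda>t. f (- t)) \<in> borel_measurable borel" using m by measurable
  have "(\<integral>t. f t \<partial>std_gauss) = (\<integral>t. std_normal_density t * f t \<partial>lborel)"
    unfolding std_gauss_def using m by (subst integral_density) auto
  also have "\<dots> = \<bar>-1\<bar> *\<^sub>R (\<integral>t. std_normal_density (0 + (-1) * t) * f (0 + (-1) * t) \<partial>lborel)"
    by (rule lborel_integral_real_affine) simp
  also have "\<dots> = (\<integral>t. std_normal_density t * f (- t) \<partial>lborel)"
    by (simp add: std_normal_density_def)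
  also have "\<dots> = (\<integral>t. f (- t) \<partial>std_gauss)"
    unfolding std_gauss_def using m2 by (subst integral_density) auto
  finally show ?thesis by simp
qed

lemma G_mono_convex:
  assumes cvx: "\<And>x y u. 0 \<le> u \<Longrightarrow> u \<le> 1 \<Longrightarrow> \<psi> (u * x + (1 - u) * y) \<le> u * \<psi> x + (1 - u) * \<psi> y"
    and int: "\<And>y. integrable std_gauss (\<lambda>t. \<psi> (y * t))"
    and meas: "\<And>y. (\<lambda>t. \<psi> (y * t)) \<in> borel_measurable borel"
    and ab: "0 \<le> a" "a \<le> b"
  shows "(\<integral>t. \<psi> (a * t) \<partial>std_gauss) \<le> (\<integral>t. \<psi> (b * t) \<partial>std_gauss)"
proof (cases "b = 0")
  case True then show ?thesis using ab by simp
next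
  case False
  then have b: "0 < b" using ab by simp
  define u where "u = (a + b) / (2 * b)"
  have u0: "0 \<le> u" and u1: "u \<le> 1" unfolding u_def using ab b by (auto simp: field_simps)
  have e: "u * (b * t) + (1 - u) * (- (b * t)) = a * t" for t
    unfolding u_def using b by (simp add: field_simps)
  have pw: "\<psi> (a * t) \<le> u * \<psi> (b * t) + (1 - u) * \<psi> (- (b * t))" for t
    using cvx[OF u0 u1, of "b * t" "- (b * t)"] e by simp
  have i1: "integrable std_gauss (\<lambda>t. \<psi> (b * t))" by (rule int)
  have i2: "integrable std_gauss (\<lambda>t. \<psi> (- (b * t)))" using int[of "-b"] by simp
  have i3: "integrable std_gauss (\<lambda>t. \<psi> (a * t))" by (rule int)
  have "(\<integral>t. \<psi> (a * t) \<partial>std_gauss) \<le> (\<integral>t. u * \<psi> (b * t) + (1 - u) * \<psi> (- (b * t)) \<partial>std_gauss)"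
    using i1 i2 i3 pw by (intro integral_mono) auto
  also have "\<dots> = u * (\<integral>t. \<psi> (b * t) \<partial>std_gauss) + (1 - u) * (\<integral>t. \<psi> (- (b * t)) \<partial>std_gauss)"
    using i1 i2 by simp
  also have "(\<integral>t. \<psi> (- (b * t)) \<partial>std_gauss) = (\<integral>t. \<psi> (b * t) \<partial>std_gauss)"
    using G_sym[OF meas[of b]] by simp
  finally show ?thesis by (simp add: algebra_simps)
qed

lemma G_mono_concave:
  assumes ccv: "\<And>x y u. 0 \<le> u \<Longrightarrow> u \<le> 1 \<Longrightarrow> u * \<psi> x + (1 - u) * \<psi> y \<le> \<psi> (u * x + (1 - u) * y)"
    and int: "\<And>y. integrable std_gauss (\<lambda>t. \<psi> (y * t))"
    and meas: "\<And>y. (\<lambda>t. \<psi> (y * t)) \<in> borel_measurable borel"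
    and ab: "0 \<le> a" "a \<le> b"
  shows "(\<integral>t. \<psi> (b * t) \<partial>std_gauss) \<le> (\<integral>t. \<psi> (a * t) \<partial>std_gauss)"
proof -
  have "(\<integral>t. - \<psi> (a * t) \<partial>std_gauss) \<le> (\<integral>t. - \<psi> (b * t) \<partial>std_gauss)"
  proof (rule G_mono_convex[where \<psi>="\<lambda>x. - \<psi> x", OF _ _ _ ab])
    show "- \<psi> (u * x + (1 - u) * y) \<le> u * - \<psi> x + (1 - u) * - \<psi> y" if "0 \<le> u" "u \<le> 1" for x y u
      using ccv[OF that, of x y] by simp
  qed (use int meas in auto)
  then show ?thesis by simp
qed

lemma LL_last_meas:
  assumes L: "LL (Suc k) F C m" and lc: "length c = k"
  shows "(\<lambda>t. F (c @ [s * t])) \<in> borel_measurable borel"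
proof -
  have L1: "LL 1 (\<lambda>l. F (c @ l @ [])) (C*(1+2 * vnorm c+2 * vnorm [])^m) m"
    by (rule LL_FIXPS) (use L lc in auto)
  have "(\<lambda>t. (\<lambda>l. F (c @ l @ [])) (map (\<lambda>i. (\<lambda>t. s * t) t) [0..<1])) \<in> borel_measurable borel"
    by (rule meas_list_LL[OF L1]) simp
  then show ?thesis by simp
qed

lemma LL_last_int:
  assumes L: "LL (Suc k) F C m" and lc: "length c = k"
  shows "integrable std_gauss (\<lambda>t. F (c @ [s * t]))"
proof (rule G_int_bound[OF LL_last_meas[OF L lc]])
  fix t
  let ?K = "\<bar>F (replicate (Suc k) 0)\<bar> + C"
  have K: "0 \<le> ?K" using LL_nonneg[OF L] by simp
  have "\<bar>F (c @ [s * t])\<bar> \<le> ?K * (1 + vnorm (c @ [s * t]))^(Suc m)"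
    using LL_growth2[OF L] lc by simp
  also have "\<dots> \<le> ?K * ((1 + vnorm c + \<bar>s\<bar>) * (1 + \<bar>t\<bar>))^(Suc m)"
  proof (intro mult_left_mono[OF _ K] power_mono)
    have "vnorm (c @ [s * t]) \<le> vnorm c + \<bar>s\<bar> * \<bar>t\<bar>" using vnorm_append_le[of c "[s * t]"] by (simp add: abs_mult)
    moreover have "(1 + vnorm c + \<bar>s\<bar>) * (1 + \<bar>t\<bar>) = 1 + vnorm c + \<bar>s\<bar> + \<bar>t\<bar> + vnorm c * \<bar>t\<bar> + \<bar>s\<bar> * \<bar>t\<bar>"
      by (simp add: algebra_simps)
    moreover have "0 \<le> vnorm c * \<bar>t\<bar>" by simp
    ultimately show "1 + vnorm (c @ [s * t]) \<le> (1 + vnorm c + \<bar>s\<bar>) * (1 + \<bar>t\<bar>)" by linarith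
  qed simp
  also have "\<dots> = (?K * (1 + vnorm c + \<bar>s\<bar>)^(Suc m)) * (1 + \<bar>t\<bar>)^(Suc m)"
    by (simp add: power_mult_distrib)
  finally show "\<bar>F (c @ [s * t])\<bar> \<le> (?K * (1 + vnorm c + \<bar>s\<bar>)^(Suc m)) * (1 + \<bar>t\<bar>)^(Suc m)" .
qed

lemma G_int_1p2: "integrable std_gauss (\<lambda>t. (1 + 2 * \<bar>s * t\<bar>)^m)"
proof (rule G_int_bound)
  show "(\<lambda>t. (1 + 2 * \<bar>s * t\<bar>)^m) \<in> borel_measurable borel" by measurable
  fix t
  have "(1 + 2 * \<bar>s * t\<bar>) \<le> (1 + 2 * \<bar>s\<bar>) * (1 + \<bar>t\<bar>)"
    by (simp add: abs_mult algebra_simps)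
  then have "(1 + 2 * \<bar>s * t\<bar>)^m \<le> ((1 + 2 * \<bar>s\<bar>) * (1 + \<bar>t\<bar>))^m"
    by (intro power_mono) auto
  then show "\<bar>(1 + 2 * \<bar>s * t\<bar>)^m\<bar> \<le> (1 + 2 * \<bar>s\<bar>)^m * (1 + \<bar>t\<bar>)^m"
    by (simp add: power_mult_distrib)
qed

definition gstep :: "real \<Rightarrow> (real list \<Rightarrow> real) \<Rightarrow> real list \<Rightarrow> real" where
  "gstep s F c = (\<integral>t. F (c @ [s * t]) \<partial>std_gauss)"

lemma LL_gstep:
  assumes L: "LL (Suc k) F C m"
  shows "LL k (gstep s F) (C * (\<integral>t. (1 + 2 * \<bar>s * t\<bar>)^m \<partial>std_gauss)) m"
proof -
  have "LL k (\<lambda>c. sE {std_gauss} (\<lambda>t. F (c @ [s * t]))) (C * sE {std_gauss} (\<lambda>t. (1 + 2 * \<bar>s * t\<bar>)^m)) m"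
  proof (rule LL_sE_last[OF G_probs L])
    show "good {std_gauss} (\<lambda>t. F (c @ [s * t]))" if "length c = k" for c
      using LL_last_int[OF L that] by (simp add: good_singleton)
    show "good {std_gauss} (\<lambda>t. (1 + 2 * \<bar>s * t\<bar>)^m)"
      using G_int_1p2 by (simp add: good_singleton)
  qed
  then show ?thesis unfolding gstep_def by simp
qed

lemma map2_comb_append:
  fixes u z :: real
  shows "length x = length y \<Longrightarrow> map2 (\<lambda>a b. u * a + (1 - u) * b) (x @ [z]) (y @ [z]) = map2 (\<lambda>a b. u * a + (1 - u) * b) x y @ [z]"
  by (simp add: left_diff_distrib)

lemma convex_gstep:
  assumes L: "LL (Suc k) F C m" and cv: "convex_fn (Suc k) F"
  shows "convex_fn k (gstep s F)"
  unfolding convex_fn_def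
proof (intro allI impI)
  fix x y :: "real list" and u :: real
  assume lx: "length x = k" and ly: "length y = k" and u0: "0 \<le> u" and u1: "u \<le> 1"
  let ?z = "map2 (\<lambda>a b. u * a + (1 - u) * b) x y"
  have lz: "length ?z = k" using lx ly by simp
  have pw: "F (?z @ [s * t]) \<le> u * F (x @ [s * t]) + (1 - u) * F (y @ [s * t])" for t
  proof -
    have h: "length (x @ [s*t]) = Suc k" "length (y @ [s*t]) = Suc k" using lx ly by auto
    have "F (map2 (\<lambda>a b. u * a + (1 - u) * b) (x @ [s * t]) (y @ [s * t])) \<le> u * F (x @ [s * t]) + (1 - u) * F (y @ [s * t])"
      using cv[unfolded convex_fn_def, rule_format, OF h u0 u1] .
    moreover have "length x = length y" using lx ly by simp
    ultimately show ?thesis by (simp only: map2_comb_append)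
  qed
  have ix: "integrable std_gauss (\<lambda>t. F (x @ [s * t]))" by (rule LL_last_int[OF L lx])
  have iy: "integrable std_gauss (\<lambda>t. F (y @ [s * t]))" by (rule LL_last_int[OF L ly])
  have iz: "integrable std_gauss (\<lambda>t. F (?z @ [s * t]))" by (rule LL_last_int[OF L lz])
  have "gstep s F ?z \<le> (\<integral>t. u * F (x @ [s * t]) + (1 - u) * F (y @ [s * t]) \<partial>std_gauss)"
    unfolding gstep_def using ix iy iz pw by (intro integral_mono) auto
  also have "\<dots> = u * gstep s F x + (1 - u) * gstep s F y"
    unfolding gstep_def using ix iy by simp
  finally show "gstep s F ?z \<le> u * gstep s F x + (1 - u) * gstep s F y" .
qed

lemma gstep_neg: "gstep s (\<lambda>x. - F x) c = - gstep s F c"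
  unfolding gstep_def by simp

lemma LL_neg: "LL k F C m \<Longrightarrow> LL k (\<lambda>x. - F x) C m"
  unfolding LL_def by (simp add: abs_minus_commute)

lemma concave_gstep:
  assumes L: "LL (Suc k) F C m" and cv: "concave_fn (Suc k) F"
  shows "concave_fn k (gstep s F)"
proof -
  have "convex_fn k (gstep s (\<lambda>x. - F x))"
    by (rule convex_gstep[OF LL_neg[OF L]]) (use cv in \<open>simp add: concave_fn_def\<close>)
  then show ?thesis unfolding concave_fn_def gstep_neg .
qed



fun giter :: "real \<Rightarrow> (real list \<Rightarrow> real) \<Rightarrow> nat \<Rightarrow> real list \<Rightarrow> real" where
  "giter s F 0 = F"
| "giter s F (Suc j) = gstep s (giter s F j)"

lemma LL_giter: "LL (k + j) F C m \<Longrightarrow> \<exists>C' m'. LL k (giter s F j) C' m'"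
proof (induction j arbitrary: k)
  case 0 then show ?case by auto
next
  case (Suc j)
  then have "LL (Suc k + j) F C m" by simp
  then obtain C' m' where "LL (Suc k) (giter s F j) C' m'" using Suc.IH by blast
  then have "LL k (gstep s (giter s F j)) (C' * (\<integral>t. (1 + 2 * \<bar>s * t\<bar>)^m' \<partial>std_gauss)) m'" by (rule LL_gstep)
  then show ?case by auto
qed

lemma convex_giter: "LL (k + j) F C m \<Longrightarrow> convex_fn (k + j) F \<Longrightarrow> convex_fn k (giter s F j)"
proof (induction j arbitrary: k)
  case 0 then show ?case by auto
next
  case (Suc j)
  then have L: "LL (Suc k + j) F C m" and cv: "convex_fn (Suc k + j) F" by simp_all
  obtain C' m' where L': "LL (Suc k) (giter s F j) C' m'" using LL_giter[OF L] by blast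
  have "convex_fn (Suc k) (giter s F j)" using Suc.IH[OF L cv] .
  then show ?case using convex_gstep[OF L'] by simp
qed

lemma concave_giter: "LL (k + j) F C m \<Longrightarrow> concave_fn (k + j) F \<Longrightarrow> concave_fn k (giter s F j)"
proof (induction j arbitrary: k)
  case 0 then show ?case by auto
next
  case (Suc j)
  then have L: "LL (Suc k + j) F C m" and cv: "concave_fn (Suc k + j) F" by simp_all
  obtain C' m' where L': "LL (Suc k) (giter s F j) C' m'" using LL_giter[OF L] by blast
  have "concave_fn (Suc k) (giter s F j)" using Suc.IH[OF L cv] .
  then show ?case using concave_gstep[OF L'] by simp
qed

lemma PSG: "product_sigma_finite (\<lambda>_::nat. std_gauss)"
  unfolding product_sigma_finite_def using prob_space_imp_sigma_finite[OF G_prob] by simp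

lemma PiM_G_prob: "prob_space (PiM I (\<lambda>_::nat. std_gauss))"
  by (rule prob_space_PiM) (rule G_prob)

lemma one_plus_sum_le_prod:
  assumes "finite I" and "\<And>i. i \<in> I \<Longrightarrow> 0 \<le> (a i::real)"
  shows "1 + (\<Sum>i\<in>I. a i) \<le> (\<Prod>i\<in>I. (1 + a i))"
  using assms
proof (induction I rule: finite_induct)
  case empty then show ?case by simp
next
  case (insert x F)
  have ax: "0 \<le> a x" using insert by simp
  have S: "0 \<le> (\<Sum>i\<in>F. a i)" using insert by (simp add: sum_nonneg)
  have "1 + (\<Sum>i\<in>insert x F. a i) = 1 + a x + (\<Sum>i\<in>F. a i)" using insert by simp
  also have "\<dots> \<le> (1 + a x) * (1 + (\<Sum>i\<in>F. a i))" using ax S by (simp add: algebra_simps)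
  also have "\<dots> \<le> (1 + a x) * (\<Prod>i\<in>F. (1 + a i))" using insert ax by (intro mult_left_mono) auto
  also have "\<dots> = (\<Prod>i\<in>insert x F. (1 + a i))" using insert by simp
  finally show ?case .
qed

lemma comp_meas_PiM:
  assumes "i \<in> I" shows "(\<lambda>z. s * z i) \<in> borel_measurable (PiM I (\<lambda>_::nat. std_gauss))"
proof -
  have "(\<lambda>z. z i) \<in> measurable (PiM I (\<lambda>_::nat. std_gauss)) std_gauss"
    by (rule measurable_component_singleton[OF assms])
  then have "(\<lambda>z. z i) \<in> borel_measurable (PiM I (\<lambda>_::nat. std_gauss))"
    by (simp add: measurable_cong_sets[OF refl G_sets])
  then show ?thesis by measurable
qed

lemma map_split_upt:
  assumes lc: "length c = k" and kn: "k \<le> n"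
  shows "map (\<lambda>i. (if i < k then (\<lambda>_. c!i) else (\<lambda>z. s * z i)) z) [0..<n] = c @ map (\<lambda>i. s * z i) [k..<n]"
proof -
  have "[0..<n] = [0..<k] @ [k..<n]" using kn by (metis le_add_diff_inverse upt_add_eq_append zero_le)
  moreover have "map (\<lambda>i. (if i < k then (\<lambda>_. c!i) else (\<lambda>z. s * z i)) z) [0..<k] = c"
    using lc by (intro nth_equalityI) auto
  moreover have "map (\<lambda>i. (if i < k then (\<lambda>_. c!i) else (\<lambda>z. s * z i)) z) [k..<n] = map (\<lambda>i. s * z i) [k..<n]"
    by (rule map_cong) auto
  ultimately show ?thesis by simp
qed

lemma PiM_meas:
  assumes L: "LL n F C m" and lc: "length c = k" and kn: "k \<le> n"
  shows "(\<lambda>z. F (c @ map (\<lambda>i. s * z i) [k..<n])) \<in> borel_measurable (PiM {k..<n} (\<lambda>_::nat. std_gauss))"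
proof -
  define g where "g i = (if i < k then (\<lambda>_. c!i) else (\<lambda>z. s * z i))" for i
  have gm: "g i \<in> borel_measurable (PiM {k..<n} (\<lambda>_::nat. std_gauss))" if "i < n" for i
    using that comp_meas_PiM[of i "{k..<n}" s] unfolding g_def by auto
  have "(\<lambda>z. F (map (\<lambda>i. g i z) [0..<n])) \<in> borel_measurable (PiM {k..<n} (\<lambda>_::nat. std_gauss))"
    by (rule meas_list_LL[OF L gm])
  then show ?thesis unfolding g_def using map_split_upt[OF lc kn] by simp
qed

lemma PiM_int:
  assumes L: "LL n F C m" and lc: "length c = k" and kn: "k \<le> n"
  shows "integrable (PiM {k..<n} (\<lambda>_::nat. std_gauss)) (\<lambda>z. F (c @ map (\<lambda>i. s * z i) [k..<n]))"
proof -
  let ?PM = "PiM {k..<n} (\<lambda>_::nat. std_gauss)"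
  let ?p = "Suc m"
  let ?K = "(\<bar>F (replicate n 0)\<bar> + C) * (1 + vnorm c + \<bar>s\<bar>)^?p"
  have K0: "0 \<le> \<bar>F (replicate n 0)\<bar> + C" using LL_nonneg[OF L] by simp
  have ip: "integrable ?PM (\<lambda>z. (\<Prod>i\<in>{k..<n}. (\<lambda>t. (1 + \<bar>t\<bar>)^?p) (z i)))"
    by (rule product_sigma_finite.product_integrable_prod[OF PSG, of "{k..<n}" "\<lambda>i t. (1 + \<bar>t\<bar>)^?p"])
       (simp, rule G_int_poly)
  then have ib: "integrable ?PM (\<lambda>z. ?K * (\<Prod>i\<in>{k..<n}. (1 + \<bar>z i\<bar>)^?p))" by simp
  show ?thesis
  proof (rule Bochner_Integration.integrable_bound[OF ib PiM_meas[OF L lc kn]])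
    show "AE z in ?PM. norm (F (c @ map (\<lambda>i. s * z i) [k..<n])) \<le> norm (?K * (\<Prod>i\<in>{k..<n}. (1 + \<bar>z i\<bar>)^?p))"
    proof (intro AE_I2)
      fix z :: "nat \<Rightarrow> real"
      let ?l = "map (\<lambda>i. s * z i) [k..<n]"
      let ?S = "\<Sum>i\<in>{k..<n}. \<bar>z i\<bar>"
      have ll: "length (c @ ?l) = n" using lc kn by simp
      have "vnorm ?l \<le> (\<Sum>x\<leftarrow>?l. \<bar>x\<bar>)" by (rule vnorm_le_sum_abs)
      also have "(\<Sum>x\<leftarrow>?l. \<bar>x\<bar>) = (\<Sum>i\<in>{k..<n}. \<bar>s * z i\<bar>)"
        using sum_set_upt_conv_sum_list_nat[of "\<lambda>i. \<bar>s * z i\<bar>" k n] by (simp add: comp_def)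
      also have "\<dots> = \<bar>s\<bar> * ?S" by (simp add: abs_mult sum_distrib_left)
      finally have nl: "vnorm ?l \<le> \<bar>s\<bar> * ?S" .
      have S0: "0 \<le> ?S" by (simp add: sum_nonneg)
      have "1 + vnorm (c @ ?l) \<le> 1 + vnorm c + \<bar>s\<bar> * ?S" using vnorm_append_le[of c ?l] nl by linarith
      also have "\<dots> \<le> (1 + vnorm c + \<bar>s\<bar>) * (1 + ?S)"
        using S0 by (simp add: algebra_simps)
      also have "\<dots> \<le> (1 + vnorm c + \<bar>s\<bar>) * (\<Prod>i\<in>{k..<n}. (1 + \<bar>z i\<bar>))"
        by (intro mult_left_mono one_plus_sum_le_prod) auto
      finally have b1: "1 + vnorm (c @ ?l) \<le> (1 + vnorm c + \<bar>s\<bar>) * (\<Prod>i\<in>{k..<n}. (1 + \<bar>z i\<bar>))" .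
      have "\<bar>F (c @ ?l)\<bar> \<le> (\<bar>F (replicate n 0)\<bar> + C) * (1 + vnorm (c @ ?l))^?p"
        using LL_growth2[OF L ll] .
      also have "\<dots> \<le> (\<bar>F (replicate n 0)\<bar> + C) * ((1 + vnorm c + \<bar>s\<bar>) * (\<Prod>i\<in>{k..<n}. (1 + \<bar>z i\<bar>)))^?p"
        using b1 K0 by (intro mult_left_mono power_mono) auto
      also have "\<dots> = ?K * (\<Prod>i\<in>{k..<n}. (1 + \<bar>z i\<bar>)^?p)"
        by (simp only: power_mult_distrib prod_power_distrib mult.assoc)
      finally have "\<bar>F (c @ ?l)\<bar> \<le> ?K * (\<Prod>i\<in>{k..<n}. (1 + \<bar>z i\<bar>)^?p)" .
      moreover have "0 \<le> ?K * (\<Prod>i\<in>{k..<n}. (1 + \<bar>z i\<bar>)^?p)" using K0 by (simp add: prod_nonneg)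
      ultimately show "norm (F (c @ ?l)) \<le> norm (?K * (\<Prod>i\<in>{k..<n}. (1 + \<bar>z i\<bar>)^?p))" by simp
    qed
  qed
qed

lemma giter_rep:
  assumes L: "LL n F C m"
  shows "k + j = n \<Longrightarrow> length c = k \<Longrightarrow>
    giter s F j c = (\<integral>z. F (c @ map (\<lambda>i. s * z i) [k..<n]) \<partial>PiM {k..<n} (\<lambda>_::nat. std_gauss))"
proof (induction j arbitrary: k c)
  case 0
  then have "k = n" by simp
  then show ?case using int_const_prob[OF PiM_G_prob, of "{n..<n}" "F c"] by simp
next
  case (Suc j)
  have kn: "k < n" using Suc.prems by simp
  let ?J = "{Suc k..<n}"
  let ?f = "\<lambda>z. F (c @ map (\<lambda>i. s * z i) [k..<n])"
  have IH: "giter s F j (c @ [s * t]) = (\<integral>z. F ((c @ [s * t]) @ map (\<lambda>i. s * z i) [Suc k..<n]) \<partial>PiM ?J (\<lambda>_::nat. std_gauss))" for t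
    using Suc.IH[of "Suc k" "c @ [s * t]"] Suc.prems by simp
  have setq: "{k..<n} = {k} \<union> ?J" using kn by auto
  have fint: "integrable (PiM ({k} \<union> ?J) (\<lambda>_::nat. std_gauss)) ?f"
    using PiM_int[OF L Suc.prems(2), of s] kn setq by simp
  have "(\<integral>z. ?f z \<partial>PiM {k..<n} (\<lambda>_::nat. std_gauss)) = (\<integral>z. ?f z \<partial>PiM ({k} \<union> ?J) (\<lambda>_::nat. std_gauss))"
    using setq by simp
  also have "\<dots> = (\<integral>x. (\<integral>y. ?f (merge {k} ?J (x, y)) \<partial>PiM ?J (\<lambda>_::nat. std_gauss)) \<partial>PiM {k} (\<lambda>_::nat. std_gauss))"
    by (rule product_sigma_finite.product_integral_fold[OF PSG _ _ _ fint]) auto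
  also have "\<dots> = (\<integral>x. giter s F j (c @ [s * x k]) \<partial>PiM {k} (\<lambda>_::nat. std_gauss))"
  proof (rule Bochner_Integration.integral_cong[OF refl])
    fix x :: "nat \<Rightarrow> real"
    have "?f (merge {k} ?J (x, y)) = F ((c @ [s * x k]) @ map (\<lambda>i. s * y i) [Suc k..<n])" for y
    proof -
      have u: "[k..<n] = k # [Suc k..<n]" using kn by (rule upt_conv_Cons)
      have m2: "map (\<lambda>i. s * merge {k} ?J (x, y) i) [Suc k..<n] = map (\<lambda>i. s * y i) [Suc k..<n]"
        by (rule map_cong) (auto simp: merge_def)
      have m1: "merge {k} ?J (x, y) k = x k" by (simp add: merge_def)
      show ?thesis unfolding u list.map m1 m2 by simp
    qed
    then show "(\<integral>y. ?f (merge {k} ?J (x, y)) \<partial>PiM ?J (\<lambda>_::nat. std_gauss)) = giter s F j (c @ [s * x k])"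
      using IH[of "x k"] by simp
  qed
  also have "\<dots> = (\<integral>t. giter s F j (c @ [s * t]) \<partial>std_gauss)"
  proof (rule product_sigma_finite.product_integral_singleton[OF PSG])
    obtain C' m' where L': "LL (Suc k) (giter s F j) C' m'" using LL_giter[of "Suc k" j F C m s] L Suc.prems by auto
    show "(\<lambda>t. giter s F j (c @ [s * t])) \<in> borel_measurable std_gauss"
      using G_meas[OF LL_last_meas[OF L' Suc.prems(2)]] .
  qed
  also have "\<dots> = giter s F (Suc j) c" by (simp add: gstep_def)
  finally show ?case by simp
qed

lemma classical_E_giter:
  assumes L: "LL n \<phi> C m"
  shows "classical_E n \<phi> s = giter s \<phi> n []"
  using giter_rep[OF L, of 0 n "[]" s] by (simp add: classical_E_def atLeast0LessThan)



definition FB :: "nat \<Rightarrow> (real list \<Rightarrow> real) \<Rightarrow> real list \<Rightarrow> real" where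
  "FB n \<phi> w = \<phi> (map (\<lambda>i. w!i * w!(n+i)) [0..<n])"

lemma sum_double: "(\<Sum>i<n+n. f i) = (\<Sum>i<n. f i) + (\<Sum>i<n. f (n + i::nat))"
proof -
  have "(\<Sum>i<n+n. f i) = (\<Sum>i\<in>{0..<n}. f i) + (\<Sum>i\<in>{n..<n+n}. f i)"
    by (simp add: sum.atLeastLessThan_concat atLeast0LessThan[symmetric])
  also have "(\<Sum>i\<in>{n..<n+n}. f i) = (\<Sum>i\<in>{0..<n}. f (i + n))"
    using sum.shift_bounds_nat_ivl[of f 0 n n] by simp
  finally show ?thesis by (simp add: atLeast0LessThan add.commute)
qed

lemma prod_pair_ineq:
  fixes a b a' b' M :: real
  assumes "\<bar>b\<bar> \<le> M" "\<bar>a'\<bar> \<le> M"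
  shows "(a * b - a' * b')^2 \<le> 2 * M^2 * ((a - a')^2 + (b - b')^2)"
proof -
  have e: "a * b - a' * b' = (a - a') * b + a' * (b - b')" by (simp add: algebra_simps)
  have "\<bar>a * b - a' * b'\<bar> \<le> M * (\<bar>a - a'\<bar> + \<bar>b - b'\<bar>)"
  proof -
    have "\<bar>a * b - a' * b'\<bar> \<le> \<bar>a - a'\<bar> * \<bar>b\<bar> + \<bar>a'\<bar> * \<bar>b - b'\<bar>"
      unfolding e by (metis abs_mult abs_triangle_ineq)
    also have "\<dots> \<le> \<bar>a - a'\<bar> * M + M * \<bar>b - b'\<bar>"
      using assms by (intro add_mono mult_left_mono mult_right_mono) auto
    finally show ?thesis by (simp add: algebra_simps)
  qed
  then have "(a * b - a' * b')^2 \<le> (M * (\<bar>a - a'\<bar> + \<bar>b - b'\<bar>))^2"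
    by (metis abs_ge_zero power2_abs power_mono)
  also have "\<dots> = M^2 * (\<bar>a - a'\<bar> + \<bar>b - b'\<bar>)^2" by (simp add: power_mult_distrib)
  also have "(\<bar>a - a'\<bar> + \<bar>b - b'\<bar>)^2 \<le> 2 * ((a - a')^2 + (b - b')^2)"
  proof -
    have "0 \<le> (\<bar>a - a'\<bar> - \<bar>b - b'\<bar>)^2" by simp
    then show ?thesis by (simp add: power2_eq_square algebra_simps)
  qed
  then have "M^2 * (\<bar>a - a'\<bar> + \<bar>b - b'\<bar>)^2 \<le> M^2 * (2 * ((a - a')^2 + (b - b')^2))"
    by (intro mult_left_mono) auto
  finally show ?thesis by (simp add: algebra_simps)
qed

lemma LL_FB:
  assumes L: "LL n \<phi> C m"
  shows "\<exists>C' m'. LL (n+n) (FB n \<phi>) C' m'"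
proof -
  let ?T = "\<lambda>w::real list. map (\<lambda>i. w!i * w!(n+i)) [0..<n]"
  have len: "length (?T w) = n" for w by simp
  have nT: "vnorm (?T w) \<le> 2 * (1 + vnorm w)^2" if lw: "length w = n + n" for w
  proof -
    have "(vnorm (?T w))^2 = (\<Sum>i<n. (w!i * w!(n+i))^2)" by (simp add: vnorm_sq_idx)
    also have "\<dots> \<le> (\<Sum>i<n. (w!i)^2 * (vnorm w)^2)"
    proof (rule sum_mono)
      fix i assume "i \<in> {..<n}"
      then have "\<bar>w!(n+i)\<bar> \<le> vnorm w" using lw by (intro abs_nth_le_vnorm) auto
      then have "(w!(n+i))^2 \<le> (vnorm w)^2" by (metis abs_ge_zero power2_abs power_mono)
      then show "(w!i * w!(n+i))^2 \<le> (w!i)^2 * (vnorm w)^2" by (simp add: power_mult_distrib mult_left_mono)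
    qed
    also have "\<dots> = (\<Sum>i<n. (w!i)^2) * (vnorm w)^2" by (simp add: sum_distrib_right)
    also have "(\<Sum>i<n. (w!i)^2) \<le> (vnorm w)^2"
      using lw by (simp add: vnorm_sq_idx sum_double sum_nonneg)
    then have "(\<Sum>i<n. (w!i)^2) * (vnorm w)^2 \<le> (vnorm w)^2 * (vnorm w)^2" by (intro mult_right_mono) auto
    finally have "(vnorm (?T w))^2 \<le> ((vnorm w)^2)^2" by (simp add: power2_eq_square)
    then have "vnorm (?T w) \<le> (vnorm w)^2" by (metis abs_of_nonneg power2_le_imp_le vnorm_nonneg zero_le_power2)
    also have "\<dots> \<le> 2 * (1 + vnorm w)^2" by (simp add: power2_eq_square algebra_simps)
    finally show ?thesis .
  qed
  have dT: "vdist (?T w) (?T w') \<le> 2 * (1 + vnorm w + vnorm w')^1 * vdist w w'"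
    if lw: "length w = n + n" and lw': "length w' = n + n" for w w'
  proof -
    let ?M = "vnorm w + vnorm w'"
    have "(vdist (?T w) (?T w'))^2 = (\<Sum>i<n. (w!i * w!(n+i) - w'!i * w'!(n+i))^2)"
      by (simp add: vdist_sq_idx)
    also have "\<dots> \<le> (\<Sum>i<n. 2 * ?M^2 * ((w!i - w'!i)^2 + (w!(n+i) - w'!(n+i))^2))"
    proof (rule sum_mono)
      fix i assume "i \<in> {..<n}"
      then have "\<bar>w!(n+i)\<bar> \<le> vnorm w" "\<bar>w'!i\<bar> \<le> vnorm w'" using lw lw' by (auto intro!: abs_nth_le_vnorm)
      then show "(w!i * w!(n+i) - w'!i * w'!(n+i))^2 \<le> 2 * ?M^2 * ((w!i - w'!i)^2 + (w!(n+i) - w'!(n+i))^2)"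
        by (intro prod_pair_ineq) (auto simp: add_increasing add_increasing2)
    qed
    also have "\<dots> = 2 * ?M^2 * (vdist w w')^2"
      using lw lw' by (simp add: vdist_sq_idx sum_double sum_distrib_left[symmetric] sum.distrib)
    finally have h: "(vdist (?T w) (?T w'))^2 \<le> (2 * (1 + vnorm w + vnorm w') * vdist w w')^2"
    proof -
      assume a: "(vdist (?T w) (?T w'))^2 \<le> 2 * ?M^2 * (vdist w w')^2"
      have "2 * ?M^2 * (vdist w w')^2 \<le> (2 * (1 + vnorm w + vnorm w') * vdist w w')^2"
      proof -
        have "?M^2 \<le> (1 + vnorm w + vnorm w')^2" by (intro power_mono) auto
        then have "2 * ?M^2 \<le> 4 * (1 + vnorm w + vnorm w')^2"
          using zero_le_power2[of "1 + vnorm w + vnorm w'"] by linarith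
        then have "2 * ?M^2 * (vdist w w')^2 \<le> 4 * (1 + vnorm w + vnorm w')^2 * (vdist w w')^2"
          by (intro mult_right_mono) auto
        moreover have "(2 * (1 + vnorm w + vnorm w') * vdist w w')^2 = 4 * (1 + vnorm w + vnorm w')^2 * (vdist w w')^2"
          by (simp add: power2_eq_square algebra_simps)
        ultimately show ?thesis by linarith
      qed
      then show ?thesis using a by linarith
    qed
    have "vdist (?T w) (?T w') \<le> 2 * (1 + vnorm w + vnorm w') * vdist w w'"
      by (rule power2_le_imp_le[OF h]) (simp add: add_nonneg_nonneg)
    then show ?thesis by simp
  qed
  have "LL (n+n) (\<lambda>w. \<phi> (?T w)) (C * (1 + 2 * 2)^m * 2) (2 * m + 1)"
  proof (rule LL_COMP[OF L])
    show "\<And>x. length x = n + n \<Longrightarrow> vnorm (?T x) \<le> 2 * (1 + vnorm x)^2" using nT .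
    show "\<And>x y. length x = n + n \<Longrightarrow> length y = n + n \<Longrightarrow> vdist (?T x) (?T y) \<le> 2 * (1 + vnorm x + vnorm y)^1 * vdist x y"
      using dT .
  qed auto
  then show ?thesis unfolding FB_def by blast
qed

definition Phi :: "nat \<Rightarrow> (real list \<Rightarrow> real) \<Rightarrow> real list \<Rightarrow> (nat \<Rightarrow> real) \<Rightarrow> real" where
  "Phi n \<phi> u z = \<phi> (map (\<lambda>i. u!i * z (n+i)) [0..<n])"

lemma FB_Phi:
  assumes "length u = n"
  shows "FB n \<phi> (u @ map (\<lambda>i. 1 * z i) [n..<n+n]) = Phi n \<phi> u z"
proof -
  have "map (\<lambda>i. (u @ map (\<lambda>i. 1 * z i) [n..<n+n])!i * (u @ map (\<lambda>i. 1 * z i) [n..<n+n])!(n+i)) [0..<n]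
        = map (\<lambda>i. u!i * z (n+i)) [0..<n]"
    using assms by (intro map_cong) (auto simp: nth_append)
  then show ?thesis unfolding FB_def Phi_def by (simp only:)
qed

lemma GB_rep:
  assumes L: "LL (n+n) (FB n \<phi>) C m" and lu: "length u = n"
  shows "giter 1 (FB n \<phi>) n u = (\<integral>z. Phi n \<phi> u z \<partial>PiM {n..<n+n} (\<lambda>_::nat. std_gauss))"
  using giter_rep[OF L, of n n u 1] lu FB_Phi[OF lu] by simp

lemma Phi_int:
  assumes L: "LL (n+n) (FB n \<phi>) C m" and lu: "length u = n"
  shows "integrable (PiM {n..<n+n} (\<lambda>_::nat. std_gauss)) (Phi n \<phi> u)"
  using PiM_int[OF L lu, of 1] FB_Phi[OF lu] by simp

lemma Phi_meas:
  assumes L: "LL (n+n) (FB n \<phi>) C m" and lu: "length u = n"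
  shows "Phi n \<phi> u \<in> borel_measurable (PiM {n..<n+n} (\<lambda>_::nat. std_gauss))"
  using Phi_int[OF L lu] by auto

lemma Phi_sym:
  assumes L: "LL (n+n) (FB n \<phi>) C m" and lu: "length u = n" and j: "j < n"
  shows "(\<integral>z. Phi n \<phi> (u[j := - b]) z \<partial>PiM {n..<n+n} (\<lambda>_::nat. std_gauss))
       = (\<integral>z. Phi n \<phi> (u[j := b]) z \<partial>PiM {n..<n+n} (\<lambda>_::nat. std_gauss))"
proof -
  let ?I = "{n..<n+n} - {n+j}"
  have ins: "{n..<n+n} = insert (n+j) ?I" using j by auto
  have fin: "finite ?I" by simp
  have nI: "n + j \<notin> ?I" by simp
  have l1: "length (u[j := - b]) = n" and l2: "length (u[j := b]) = n" using lu by auto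
  have i1: "integrable (PiM (insert (n+j) ?I) (\<lambda>_::nat. std_gauss)) (Phi n \<phi> (u[j := - b]))"
    unfolding ins[symmetric] by (rule Phi_int[OF L l1])
  have i2: "integrable (PiM (insert (n+j) ?I) (\<lambda>_::nat. std_gauss)) (Phi n \<phi> (u[j := b]))"
    unfolding ins[symmetric] by (rule Phi_int[OF L l2])
  have m2: "Phi n \<phi> (u[j := b]) \<in> borel_measurable (PiM (insert (n+j) ?I) (\<lambda>_::nat. std_gauss))"
    using i2 by (rule borel_measurable_integrable)
  have pw: "Phi n \<phi> (u[j := - b]) (x(n+j := y)) = Phi n \<phi> (u[j := b]) (x(n+j := - y))" for x y
    unfolding Phi_def using lu j by (intro arg_cong[where f=\<phi>] map_cong) auto
  have "(\<integral>z. Phi n \<phi> (u[j := - b]) z \<partial>PiM (insert (n+j) ?I) (\<lambda>_::nat. std_gauss))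
      = (\<integral>x. (\<integral>y. Phi n \<phi> (u[j := - b]) (x(n+j := y)) \<partial>std_gauss) \<partial>PiM ?I (\<lambda>_::nat. std_gauss))"
    by (rule product_sigma_finite.product_integral_insert[OF PSG fin nI i1])
  then have "(\<integral>z. Phi n \<phi> (u[j := - b]) z \<partial>PiM {n..<n+n} (\<lambda>_::nat. std_gauss))
      = (\<integral>x. (\<integral>y. Phi n \<phi> (u[j := - b]) (x(n+j := y)) \<partial>std_gauss) \<partial>PiM ?I (\<lambda>_::nat. std_gauss))"
    unfolding ins[symmetric] .
  also have "\<dots> = (\<integral>x. (\<integral>y. Phi n \<phi> (u[j := b]) (x(n+j := y)) \<partial>std_gauss) \<partial>PiM ?I (\<lambda>_::nat. std_gauss))"
  proof (rule Bochner_Integration.integral_cong[OF refl])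
    fix x assume x: "x \<in> space (PiM ?I (\<lambda>_::nat. std_gauss))"
    have "(\<lambda>v. x(n+j := v)) \<in> measurable std_gauss (PiM (insert (n+j) ?I) (\<lambda>_::nat. std_gauss))"
      using measurable_component_update[OF x nI] by simp
    then have "(\<lambda>v. Phi n \<phi> (u[j := b]) (x(n+j := v))) \<in> borel_measurable std_gauss"
      using m2 by measurable
    then have mb: "(\<lambda>v. Phi n \<phi> (u[j := b]) (x(n+j := v))) \<in> borel_measurable borel"
      by (simp add: measurable_cong_sets[OF G_sets refl])
    show "(\<integral>y. Phi n \<phi> (u[j := - b]) (x(n+j := y)) \<partial>std_gauss) = (\<integral>y. Phi n \<phi> (u[j := b]) (x(n+j := y)) \<partial>std_gauss)"
      unfolding pw using G_sym[OF mb] by simp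
  qed
  also have "\<dots> = (\<integral>z. Phi n \<phi> (u[j := b]) z \<partial>PiM (insert (n+j) ?I) (\<lambda>_::nat. std_gauss))"
    by (rule product_sigma_finite.product_integral_insert[OF PSG fin nI i2, symmetric])
  also have "\<dots> = (\<integral>z. Phi n \<phi> (u[j := b]) z \<partial>PiM {n..<n+n} (\<lambda>_::nat. std_gauss))"
    unfolding ins[symmetric] ..
  finally show ?thesis .
qed

lemma Phi_mono_convex:
  assumes L: "LL (n+n) (FB n \<phi>) C m" and lu: "length u = n" and j: "j < n"
    and cv: "convex_fn n \<phi>" and ab: "0 \<le> a" "a \<le> b"
  shows "(\<integral>z. Phi n \<phi> (u[j := a]) z \<partial>PiM {n..<n+n} (\<lambda>_::nat. std_gauss))
       \<le> (\<integral>z. Phi n \<phi> (u[j := b]) z \<partial>PiM {n..<n+n} (\<lambda>_::nat. std_gauss))"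
proof (cases "b = 0")
  case True then show ?thesis using ab by simp
next
  case False
  then have b: "0 < b" using ab by simp
  let ?PM = "PiM {n..<n+n} (\<lambda>_::nat. std_gauss)"
  define v where "v = (a + b) / (2 * b)"
  have v0: "0 \<le> v" and v1: "v \<le> 1" unfolding v_def using ab b by (auto simp: field_simps)
  have comb: "v * b + (1 - v) * (- b) = a" unfolding v_def using b by (simp add: field_simps)
  have la: "length (u[j := a]) = n" and lb: "length (u[j := b]) = n" and lmb: "length (u[j := - b]) = n"
    using lu by auto
  have pw: "Phi n \<phi> (u[j := a]) z \<le> v * Phi n \<phi> (u[j := b]) z + (1 - v) * Phi n \<phi> (u[j := - b]) z" for z
  proof -
    let ?Wb = "map (\<lambda>i. u[j := b]!i * z (n+i)) [0..<n]"
    let ?Wm = "map (\<lambda>i. u[j := - b]!i * z (n+i)) [0..<n]"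
    have "map2 (\<lambda>x y. v * x + (1 - v) * y) ?Wb ?Wm = map (\<lambda>i. u[j := a]!i * z (n+i)) [0..<n]"
    proof (rule nth_equalityI)
      show "length (map2 (\<lambda>x y. v * x + (1 - v) * y) ?Wb ?Wm) = length (map (\<lambda>i. u[j := a]!i * z (n+i)) [0..<n])" by simp
      fix i assume "i < length (map2 (\<lambda>x y. v * x + (1 - v) * y) ?Wb ?Wm)"
      then have i: "i < n" by simp
      show "map2 (\<lambda>x y. v * x + (1 - v) * y) ?Wb ?Wm ! i = map (\<lambda>i. u[j := a]!i * z (n+i)) [0..<n] ! i"
      proof (cases "i = j")
        case True
        have "v * (b * z (n+j)) + (1 - v) * (- b * z (n+j)) = (v * b + (1 - v) * (- b)) * z (n+j)"
          by (simp add: algebra_simps)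
        then show ?thesis using True i lu comb by simp
      next
        case False
        then show ?thesis using i lu by (simp add: algebra_simps)
      qed
    qed
    moreover have "\<phi> (map2 (\<lambda>x y. v * x + (1 - v) * y) ?Wb ?Wm) \<le> v * \<phi> ?Wb + (1 - v) * \<phi> ?Wm"
      using cv v0 v1 unfolding convex_fn_def by simp
    ultimately show ?thesis unfolding Phi_def by simp
  qed
  have ia: "integrable ?PM (Phi n \<phi> (u[j := a]))" by (rule Phi_int[OF L la])
  have ib: "integrable ?PM (Phi n \<phi> (u[j := b]))" by (rule Phi_int[OF L lb])
  have im: "integrable ?PM (Phi n \<phi> (u[j := - b]))" by (rule Phi_int[OF L lmb])
  have "(\<integral>z. Phi n \<phi> (u[j := a]) z \<partial>?PM) \<le> (\<integral>z. v * Phi n \<phi> (u[j := b]) z + (1 - v) * Phi n \<phi> (u[j := - b]) z \<partial>?PM)"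
    using ia ib im pw by (intro integral_mono) auto
  also have "\<dots> = v * (\<integral>z. Phi n \<phi> (u[j := b]) z \<partial>?PM) + (1 - v) * (\<integral>z. Phi n \<phi> (u[j := - b]) z \<partial>?PM)"
    using ib im by simp
  also have "(\<integral>z. Phi n \<phi> (u[j := - b]) z \<partial>?PM) = (\<integral>z. Phi n \<phi> (u[j := b]) z \<partial>?PM)"
    by (rule Phi_sym[OF L lu j])
  finally show ?thesis by (simp add: algebra_simps)
qed

lemma FB_neg: "FB n (\<lambda>x. - \<phi> x) = (\<lambda>w. - FB n \<phi> w)"
  unfolding FB_def by simp

lemma Phi_neg: "Phi n (\<lambda>x. - \<phi> x) u z = - Phi n \<phi> u z"
  unfolding Phi_def by simp

lemma Phi_mono_concave:
  assumes L: "LL (n+n) (FB n \<phi>) C m" and lu: "length u = n" and j: "j < n"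
    and cv: "concave_fn n \<phi>" and ab: "0 \<le> a" "a \<le> b"
  shows "(\<integral>z. Phi n \<phi> (u[j := b]) z \<partial>PiM {n..<n+n} (\<lambda>_::nat. std_gauss))
       \<le> (\<integral>z. Phi n \<phi> (u[j := a]) z \<partial>PiM {n..<n+n} (\<lambda>_::nat. std_gauss))"
proof -
  have L': "LL (n+n) (FB n (\<lambda>x. - \<phi> x)) C m" unfolding FB_neg using LL_neg[OF L] .
  have cv': "convex_fn n (\<lambda>x. - \<phi> x)" using cv unfolding concave_fn_def .
  show ?thesis using Phi_mono_convex[OF L' lu j cv' ab] unfolding Phi_neg by simp
qed

lemma giter_FB_rep:
  assumes "length x + j = n"
  shows "giter 1 (FB n \<phi>) j (replicate n s @ x) = giter s \<phi> j (map ((*) s) x)"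
  using assms
proof (induction j arbitrary: x)
  case 0
  have "map (\<lambda>i. (replicate n s @ x)!i * (replicate n s @ x)!(n+i)) [0..<n] = map ((*) s) x"
    using 0 by (intro nth_equalityI) (auto simp: nth_append)
  then show ?case unfolding FB_def by simp
next
  case (Suc j)
  have "giter 1 (FB n \<phi>) (Suc j) (replicate n s @ x) = (\<integral>t. giter 1 (FB n \<phi>) j ((replicate n s @ x) @ [1 * t]) \<partial>std_gauss)"
    by (simp add: gstep_def)
  also have "\<dots> = (\<integral>t. giter s \<phi> j (map ((*) s) x @ [s * t]) \<partial>std_gauss)"
    using Suc.IH[of "x @ [t]" for t] Suc.prems by simp
  also have "\<dots> = giter s \<phi> (Suc j) (map ((*) s) x)" by (simp add: gstep_def)
  finally show ?case .
qed



definition Kf :: "bool \<Rightarrow> nat \<Rightarrow> (real list \<Rightarrow> real) \<Rightarrow> bool" where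
  "Kf b k F = (if b then convex_fn k F else concave_fn k F)"

definition sc :: "bool \<Rightarrow> real \<Rightarrow> real \<Rightarrow> real" where
  "sc b sl su = (if b then su else sl)"

lemma sc_in: "sl \<le> su \<Longrightarrow> sc b sl su \<in> {sl..su}" unfolding sc_def by auto

lemma Kf_giter: assumes L: "LL (k + j) F C m" and K: "Kf b (k + j) F" shows "Kf b k (giter s F j)"
proof (cases b)
  case True
  then have "convex_fn (k + j) F" using K unfolding Kf_def by simp
  then have "convex_fn k (giter s F j)" by (rule convex_giter[OF L])
  then show ?thesis using True unfolding Kf_def by simp
next
  case False
  then have "concave_fn (k + j) F" using K unfolding Kf_def by simp
  then have "concave_fn k (giter s F j)" by (rule concave_giter[OF L])
  then show ?thesis using False unfolding Kf_def by simp
qed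

lemma map2_comb_same: "map2 (\<lambda>a b. u * a + (1 - u) * b) c c = (c::real list)"
  by (induction c) (auto simp: algebra_simps)

lemma map2_comb_last:
  "map2 (\<lambda>a b. u * a + (1 - u) * b) (c @ [x]) (c @ [y]) = c @ [u * x + (1 - u) * (y::real)]"
  using map2_comb_same[of u c] by simp

lemma LL_cong: "(\<And>x. length x = k \<Longrightarrow> f x = g x) \<Longrightarrow> LL k f C m \<Longrightarrow> LL k g C m"
  unfolding LL_def by auto

lemma mono1:
  assumes L: "LL (Suc k) F C m" and lc: "length c = k" and K: "Kf b (Suc k) F"
    and sig: "0 \<le> sl" "sl \<le> su" and v: "v \<in> {sl..su}"
  shows "gstep v F c \<le> gstep (sc b sl su) F c"
proof -
  let ?p = "\<lambda>y. F (c @ [y])"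
  have int: "integrable std_gauss (\<lambda>t. ?p (y * t))" for y using LL_last_int[OF L lc] .
  have meas: "(\<lambda>t. ?p (y * t)) \<in> borel_measurable borel" for y using LL_last_meas[OF L lc] .
  have lxy: "length (c @ [x]) = Suc k" for x using lc by simp
  show ?thesis
  proof (cases b)
    case True
    then have cv: "convex_fn (Suc k) F" using K unfolding Kf_def by simp
    have cvx: "?p (u * x + (1 - u) * y) \<le> u * ?p x + (1 - u) * ?p y" if "0 \<le> u" "u \<le> 1" for x y u
      using cv[unfolded convex_fn_def, rule_format, OF lxy lxy that] unfolding map2_comb_last .
    have "(\<integral>t. ?p (v * t) \<partial>std_gauss) \<le> (\<integral>t. ?p (su * t) \<partial>std_gauss)"
      by (rule G_mono_convex[OF cvx int meas]) (use v sig in auto)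
    then show ?thesis using True unfolding gstep_def sc_def by simp
  next
    case False
    then have cv: "convex_fn (Suc k) (\<lambda>x. - F x)" using K unfolding Kf_def concave_fn_def by simp
    have ccv: "u * ?p x + (1 - u) * ?p y \<le> ?p (u * x + (1 - u) * y)" if "0 \<le> u" "u \<le> 1" for x y u
    proof -
      have "- F (c @ [u * x + (1 - u) * y]) \<le> u * - F (c @ [x]) + (1 - u) * - F (c @ [y])"
        using cv[unfolded convex_fn_def, rule_format, OF lxy[of x] lxy[of y] that] unfolding map2_comb_last .
      then show ?thesis by (simp add: algebra_simps)
    qed
    have "(\<integral>t. ?p (v * t) \<partial>std_gauss) \<le> (\<integral>t. ?p (sl * t) \<partial>std_gauss)"
      by (rule G_mono_concave[OF ccv int meas]) (use v sig in auto)
    then show ?thesis using False unfolding gstep_def sc_def by simp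
  qed
qed

lemma SUP_attained: "s \<in> A \<Longrightarrow> (\<And>v. v \<in> A \<Longrightarrow> f v \<le> f s) \<Longrightarrow> (SUP v\<in>A. f v) = (f s :: real)"
  by (rule cSup_eq_maximum) auto

lemma ONE:
  assumes ss: "sublinear_space M P H" and VH: "V \<in> H" and eH: "e \<in> H"
    and Vd: "maximal_dist P V sl su" and ed: "std_normal_dist P e" and dec: "indep_of P [V] e"
    and L: "LL (Suc k) \<psi> C m" and lc: "length c = k" and K: "Kf b (Suc k) \<psi>"
    and sig: "0 \<le> sl" "sl \<le> su"
  shows "sE P (\<lambda>\<omega>. \<psi> (c @ [V \<omega> * e \<omega>])) = gstep (sc b sl su) \<psi> c"
proof -
  have L1: "LL 1 (\<lambda>x. \<psi> (c @ x @ [])) (C*(1+2 * vnorm c+2 * vnorm [])^m) m"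
    by (rule LL_FIXPS[where a=k and d=0]) (use L lc in auto)
  obtain C2 m2 where L2: "LL (1+1) (FB 1 (\<lambda>x. \<psi> (c @ x @ []))) C2 m2" using LL_FB[OF L1] by blast
  let ?chi = "FB 1 (\<lambda>x. \<psi> (c @ x @ []))"
  have chi: "?chi [a, d] = \<psi> (c @ [a * d])" for a d by (simp add: FB_def)
  have ext: "sE P (\<lambda>\<omega>. ?chi (vals [V] \<omega> @ [e \<omega>])) = sE P (\<lambda>\<omega>. sE P (\<lambda>\<omega>'. ?chi (vals [V] \<omega> @ [e \<omega>'])))"
  proof (rule indep_ext[OF ss _ eH dec])
    show "set [V] \<subseteq> H" using VH by simp
    show "LL (Suc (length [V])) ?chi C2 m2" using L2 by simp
  qed
  have inner: "sE P (\<lambda>\<omega>'. \<psi> (c @ [v * e \<omega>'])) = gstep v \<psi> c" for v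
  proof -
    have Lv: "LL 1 (\<lambda>l. ?chi ([v] @ l @ [])) (C2*(1+2 * vnorm [v]+2 * vnorm [])^m2) m2"
      by (rule LL_FIXPS[where a=1 and d=0]) (use L2 in auto)
    have "sE P (\<lambda>\<omega>. (\<lambda>l. ?chi ([v] @ l @ [])) [e \<omega>]) = (\<integral>z. (\<lambda>l. ?chi ([v] @ l @ [])) [z] \<partial>std_gauss)"
      by (rule ed[unfolded std_normal_dist_def, rule_format, OF LL_imp_lLip[OF Lv]])
    then show ?thesis unfolding gstep_def by (simp add: FB_def)
  qed
  have outer: "sE P (\<lambda>\<omega>. gstep (V \<omega>) \<psi> c) = (SUP v\<in>{sl..su}. gstep v \<psi> c)"
  proof -
    have L2': "LL (Suc 1) ?chi C2 m2" using L2 by simp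
    define C3 where "C3 = C2 * (\<integral>t. (1 + 2 * \<bar>1 * t\<bar>)^m2 \<partial>std_gauss)"
    have L3: "LL 1 (gstep 1 ?chi) C3 m2" unfolding C3_def by (rule LL_gstep[OF L2'])
    have e3: "gstep 1 ?chi l = gstep (hd l) \<psi> c" if ll: "length l = 1" for l
    proof -
      obtain v where lv: "l = [v]" using ll by (cases l) auto
      show ?thesis unfolding lv by (simp add: gstep_def FB_def)
    qed
    have L3': "LL 1 (\<lambda>l. gstep (hd l) \<psi> c) C3 m2" by (rule LL_cong[OF e3 L3])
    have "sE P (\<lambda>\<omega>. (\<lambda>l. gstep (hd l) \<psi> c) [V \<omega>]) = (SUP v\<in>{sl..su}. (\<lambda>l. gstep (hd l) \<psi> c) [v])"
      by (rule Vd[unfolded maximal_dist_def, rule_format, OF LL_imp_lLip[OF L3']])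
    then show ?thesis by simp
  qed
  have sup: "(SUP v\<in>{sl..su}. gstep v \<psi> c) = gstep (sc b sl su) \<psi> c"
    by (rule SUP_attained[OF sc_in[OF sig(2)]]) (rule mono1[OF L lc K sig])
  have "sE P (\<lambda>\<omega>. \<psi> (c @ [V \<omega> * e \<omega>])) = sE P (\<lambda>\<omega>. ?chi (vals [V] \<omega> @ [e \<omega>]))"
    by (simp add: FB_def)
  also have "\<dots> = sE P (\<lambda>\<omega>. sE P (\<lambda>\<omega>'. \<psi> (c @ [V \<omega> * e \<omega>'])))"
    unfolding ext by (simp add: FB_def)
  also have "\<dots> = sE P (\<lambda>\<omega>. gstep (V \<omega>) \<psi> c)" using inner by simp
  finally show ?thesis using outer sup by simp
qed

lemma indep_Nil: "probs P \<Longrightarrow> indep_of P [] Y"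
  unfolding indep_of_def by (simp add: sE_const)

lemma seq_indep_take:
  assumes p: "probs P" and si: "seq_indep P Zs" and k: "k < length Zs"
  shows "indep_of P (take k Zs) (Zs ! k)"
proof (cases "k = 0")
  case True then show ?thesis using indep_Nil[OF p] by simp
next
  case False then show ?thesis using si k unfolding seq_indep_def by simp
qed

lemma vals_take_Suc: "k < length Zs \<Longrightarrow> vals (take (Suc k) Zs) \<omega> = vals (take k Zs) \<omega> @ [(Zs ! k) \<omega>]"
  by (simp add: take_Suc_conv_app_nth)



lemma monoB:
  assumes L: "LL (n+n) (FB n \<phi>) CB mB" and lu: "length u = n" and k: "k < n" and K: "Kf b n \<phi>"
    and sig: "0 \<le> sl" "sl \<le> su" and v: "v \<in> {sl..su}"
  shows "giter 1 (FB n \<phi>) n (u[k := v]) \<le> giter 1 (FB n \<phi>) n (u[k := sc b sl su])"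
proof -
  have l1: "length (u[k := v]) = n" and l2: "length (u[k := sc b sl su]) = n" using lu by auto
  show ?thesis
  proof (cases b)
    case True
    then have cv: "convex_fn n \<phi>" using K unfolding Kf_def by simp
    have "(\<integral>z. Phi n \<phi> (u[k := v]) z \<partial>PiM {n..<n+n} (\<lambda>_::nat. std_gauss))
       \<le> (\<integral>z. Phi n \<phi> (u[k := su]) z \<partial>PiM {n..<n+n} (\<lambda>_::nat. std_gauss))"
      by (rule Phi_mono_convex[OF L lu k cv]) (use v sig in auto)
    then show ?thesis using True GB_rep[OF L l1] GB_rep[OF L l2] unfolding sc_def by simp
  next
    case False
    then have cv: "concave_fn n \<phi>" using K unfolding Kf_def by simp
    have "(\<integral>z. Phi n \<phi> (u[k := v]) z \<partial>PiM {n..<n+n} (\<lambda>_::nat. std_gauss))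
       \<le> (\<integral>z. Phi n \<phi> (u[k := sl]) z \<partial>PiM {n..<n+n} (\<lambda>_::nat. std_gauss))"
      by (rule Phi_mono_concave[OF L lu k cv]) (use v sig in auto)
    then show ?thesis using False GB_rep[OF L l1] GB_rep[OF L l2] unfolding sc_def by simp
  qed
qed

lemma prodH:
  assumes ss: "sublinear_space M P H" and "A \<in> H" "B \<in> H"
  shows "(\<lambda>\<omega>. A \<omega> * B \<omega>) \<in> H"
proof -
  obtain C2 m2 where L2: "LL (1+1) (FB 1 hd) C2 m2" using LL_FB[OF LL_hd] by blast
  have "(\<lambda>\<omega>. FB 1 hd (vals [A, B] \<omega>)) \<in> H"
    by (rule ss_comp_LL[OF ss]) (use assms L2 in auto)
  then show ?thesis by (simp add: FB_def vals_def)
qed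

lemma caseA:
  assumes ss: "sublinear_space M P H" and sig: "0 \<le> sl" "sl \<le> su"
    and inH: "\<And>i. i < n \<Longrightarrow> V i \<in> H \<and> e i \<in> H"
    and Vdist: "\<And>i. i < n \<Longrightarrow> maximal_dist P (V i) sl su"
    and edist: "\<And>i. i < n \<Longrightarrow> std_normal_dist P (e i)"
    and decomp: "\<And>i. i < n \<Longrightarrow> indep_of P [V i] (e i)"
    and L: "LL n \<phi> C m" and K: "Kf b n \<phi>"
    and ind: "seq_indep P (map (\<lambda>i \<omega>. V i \<omega> * e i \<omega>) [0..<n])"
  shows "sE P (\<lambda>\<omega>. \<phi> (map (\<lambda>i. V i \<omega> * e i \<omega>) [0..<n])) = classical_E n \<phi> (sc b sl su)"
proof -
  have p: "probs P" by (rule ss_probs[OF ss])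
  define s where "s = sc b sl su"
  define Ws where "Ws = map (\<lambda>i \<omega>. V i \<omega> * e i \<omega>) [0..<n]"
  have lW: "length Ws = n" unfolding Ws_def by simp
  have Wk: "Ws ! k = (\<lambda>\<omega>. V k \<omega> * e k \<omega>)" if "k < n" for k unfolding Ws_def using that by simp
  have WH: "set Ws \<subseteq> H" unfolding Ws_def using prodH[OF ss] inH by auto
  have main: "j \<le> n \<Longrightarrow> sE P (\<lambda>\<omega>. giter s \<phi> j (vals (take (n - j) Ws) \<omega>)) = sE P (\<lambda>\<omega>. \<phi> (vals Ws \<omega>))" for j
  proof (induction j)
    case 0 then show ?case using lW by simp
  next
    case (Suc j)
    define k where "k = n - Suc j"
    have kn: "k < n" and nj: "n - j = Suc k" and kj: "Suc k + j = n" using Suc.prems unfolding k_def by auto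
    have IH: "sE P (\<lambda>\<omega>. giter s \<phi> j (vals (take (Suc k) Ws) \<omega>)) = sE P (\<lambda>\<omega>. \<phi> (vals Ws \<omega>))"
      using Suc.IH Suc.prems nj by simp
    have Lsk: "LL (Suc k + j) \<phi> C m" using L kj by simp
    obtain C' m' where L': "LL (Suc k) (giter s \<phi> j) C' m'" using LL_giter[OF Lsk] by blast
    have K': "Kf b (Suc k) (giter s \<phi> j)" using Kf_giter[OF Lsk] K kj by simp
    have tH: "set (take k Ws) \<subseteq> H" using WH by (meson order_trans set_take_subset)
    have kH: "Ws ! k \<in> H" using WH kn lW by auto
    have ind': "seq_indep P Ws" using ind unfolding Ws_def .
    have ik: "indep_of P (take k Ws) (Ws ! k)" by (rule seq_indep_take[OF p ind']) (use kn lW in simp)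
    have lt: "length (take k Ws) = k" using kn lW by simp
    have ext: "sE P (\<lambda>\<omega>. giter s \<phi> j (vals (take k Ws) \<omega> @ [(Ws ! k) \<omega>]))
        = sE P (\<lambda>\<omega>. sE P (\<lambda>\<omega>'. giter s \<phi> j (vals (take k Ws) \<omega> @ [(Ws ! k) \<omega>'])))"
      by (rule indep_ext[OF ss tH kH ik]) (use L' lt in simp)
    have inner: "sE P (\<lambda>\<omega>'. giter s \<phi> j (c @ [(Ws ! k) \<omega>'])) = gstep s (giter s \<phi> j) c" if lc: "length c = k" for c
    proof -
      have "sE P (\<lambda>\<omega>'. giter s \<phi> j (c @ [V k \<omega>' * e k \<omega>'])) = gstep (sc b sl su) (giter s \<phi> j) c"
        by (rule ONE[OF ss _ _ Vdist[OF kn] edist[OF kn] decomp[OF kn] L' lc K' sig]) (use inH kn in auto)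
      then show ?thesis unfolding Wk[OF kn] s_def[symmetric] .
    qed
    have "sE P (\<lambda>\<omega>. giter s \<phi> (Suc j) (vals (take (n - Suc j) Ws) \<omega>))
        = sE P (\<lambda>\<omega>. gstep s (giter s \<phi> j) (vals (take k Ws) \<omega>))" unfolding k_def by simp
    also have "\<dots> = sE P (\<lambda>\<omega>. sE P (\<lambda>\<omega>'. giter s \<phi> j (vals (take k Ws) \<omega> @ [(Ws ! k) \<omega>'])))"
      using inner lt by simp
    also have "\<dots> = sE P (\<lambda>\<omega>. giter s \<phi> j (vals (take k Ws) \<omega> @ [(Ws ! k) \<omega>]))" using ext by simp
    also have "\<dots> = sE P (\<lambda>\<omega>. giter s \<phi> j (vals (take (Suc k) Ws) \<omega>))"
      using vals_take_Suc[of k Ws] kn lW by simp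
    finally show ?case using IH by simp
  qed
  have vW: "vals Ws \<omega> = map (\<lambda>i. V i \<omega> * e i \<omega>) [0..<n]" for \<omega> unfolding Ws_def vals_def by simp
  have "sE P (\<lambda>\<omega>. \<phi> (map (\<lambda>i. V i \<omega> * e i \<omega>) [0..<n])) = sE P (\<lambda>\<omega>. giter s \<phi> n (vals (take 0 Ws) \<omega>))"
    using main[of n] vW by simp
  also have "\<dots> = giter s \<phi> n []" using sE_const[OF p] by simp
  also have "\<dots> = classical_E n \<phi> s" using classical_E_giter[OF L] by simp
  finally show ?thesis unfolding s_def .
qed

lemma caseB:
  assumes ss: "sublinear_space M P H" and sig: "0 \<le> sl" "sl \<le> su"
    and inH: "\<And>i. i < n \<Longrightarrow> V i \<in> H \<and> e i \<in> H"
    and Vdist: "\<And>i. i < n \<Longrightarrow> maximal_dist P (V i) sl su"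
    and edist: "\<And>i. i < n \<Longrightarrow> std_normal_dist P (e i)"
    and L: "LL n \<phi> C m" and K: "Kf b n \<phi>"
    and ind: "seq_indep P (map V [0..<n] @ map e [0..<n])"
  shows "sE P (\<lambda>\<omega>. \<phi> (map (\<lambda>i. V i \<omega> * e i \<omega>) [0..<n])) = classical_E n \<phi> (sc b sl su)"
proof -
  have p: "probs P" by (rule ss_probs[OF ss])
  define s where "s = sc b sl su"
  have sin: "s \<in> {sl..su}" unfolding s_def using sc_in[OF sig(2)] .
  define Zs where "Zs = map V [0..<n] @ map e [0..<n]"
  have lZ: "length Zs = n + n" unfolding Zs_def by simp
  have ZV: "Zs ! k = V k" if "k < n" for k unfolding Zs_def using that by (simp add: nth_append)
  have Ze: "Zs ! k = e (k - n)" if "n \<le> k" "k < n + n" for k unfolding Zs_def using that by (simp add: nth_append)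
  have ZH: "set Zs \<subseteq> H" unfolding Zs_def using inH by auto
  have tH: "set (take k Zs) \<subseteq> H" for k using ZH by (meson order_trans set_take_subset)
  obtain CB mB where LB: "LL (n+n) (FB n \<phi>) CB mB" using LL_FB[OF L] by blast
  let ?GB = "giter 1 (FB n \<phi>) n"
  have stage1: "j \<le> n \<Longrightarrow> sE P (\<lambda>\<omega>. giter 1 (FB n \<phi>) j (vals (take (n + n - j) Zs) \<omega>)) = sE P (\<lambda>\<omega>. FB n \<phi> (vals Zs \<omega>))" for j
  proof (induction j)
    case 0 then show ?case using lZ by simp
  next
    case (Suc j)
    define k where "k = n + n - Suc j"
    have kn: "n \<le> k" "k < n + n" and nj: "n + n - j = Suc k" and kj: "Suc k + j = n + n"
      using Suc.prems unfolding k_def by auto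
    have IH: "sE P (\<lambda>\<omega>. giter 1 (FB n \<phi>) j (vals (take (Suc k) Zs) \<omega>)) = sE P (\<lambda>\<omega>. FB n \<phi> (vals Zs \<omega>))"
      using Suc.IH Suc.prems nj by simp
    have Lsk: "LL (Suc k + j) (FB n \<phi>) CB mB" using LB kj by simp
    obtain C' m' where L': "LL (Suc k) (giter 1 (FB n \<phi>) j) C' m'" using LL_giter[OF Lsk] by blast
    have kH: "Zs ! k \<in> H" using ZH kn lZ by auto
    have ind': "seq_indep P Zs" using ind unfolding Zs_def .
    have ik: "indep_of P (take k Zs) (Zs ! k)" by (rule seq_indep_take[OF p ind']) (use kn lZ in simp)
    have lt: "length (take k Zs) = k" using kn lZ by simp
    have ext: "sE P (\<lambda>\<omega>. giter 1 (FB n \<phi>) j (vals (take k Zs) \<omega> @ [(Zs ! k) \<omega>]))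
        = sE P (\<lambda>\<omega>. sE P (\<lambda>\<omega>'. giter 1 (FB n \<phi>) j (vals (take k Zs) \<omega> @ [(Zs ! k) \<omega>'])))"
      by (rule indep_ext[OF ss tH kH ik]) (use L' lt in simp)
    have kn': "k - n < n" using kn by simp
    have inner: "sE P (\<lambda>\<omega>'. giter 1 (FB n \<phi>) j (c @ [(Zs ! k) \<omega>'])) = gstep 1 (giter 1 (FB n \<phi>) j) c"
      if lc: "length c = k" for c
    proof -
      have Lc: "LL 1 (\<lambda>l. giter 1 (FB n \<phi>) j (c @ l @ [])) (C'*(1+2 * vnorm c+2 * vnorm [])^m') m'"
        by (rule LL_FIXPS[where a=k and d=0]) (use L' lc in auto)
      have "sE P (\<lambda>\<omega>. (\<lambda>l. giter 1 (FB n \<phi>) j (c @ l @ [])) [e (k - n) \<omega>])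
          = (\<integral>z. (\<lambda>l. giter 1 (FB n \<phi>) j (c @ l @ [])) [z] \<partial>std_gauss)"
        by (rule edist[OF kn', unfolded std_normal_dist_def, rule_format, OF LL_imp_lLip[OF Lc]])
      then show ?thesis unfolding Ze[OF kn] gstep_def by simp
    qed
    have "sE P (\<lambda>\<omega>. giter 1 (FB n \<phi>) (Suc j) (vals (take (n + n - Suc j) Zs) \<omega>))
        = sE P (\<lambda>\<omega>. gstep 1 (giter 1 (FB n \<phi>) j) (vals (take k Zs) \<omega>))" unfolding k_def by simp
    also have "\<dots> = sE P (\<lambda>\<omega>. sE P (\<lambda>\<omega>'. giter 1 (FB n \<phi>) j (vals (take k Zs) \<omega> @ [(Zs ! k) \<omega>'])))"
      using inner lt by simp
    also have "\<dots> = sE P (\<lambda>\<omega>. giter 1 (FB n \<phi>) j (vals (take k Zs) \<omega> @ [(Zs ! k) \<omega>]))" using ext by simp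
    also have "\<dots> = sE P (\<lambda>\<omega>. giter 1 (FB n \<phi>) j (vals (take (Suc k) Zs) \<omega>))"
      using vals_take_Suc[of k Zs] kn lZ by simp
    finally show ?case using IH by simp
  qed
  obtain CG mG where LG: "LL n ?GB CG mG" using LL_giter[of n n "FB n \<phi>" CB mB 1] LB by auto
  have stage2: "j \<le> n \<Longrightarrow> sE P (\<lambda>\<omega>. ?GB (vals (take (n - j) Zs) \<omega> @ replicate j s)) = sE P (\<lambda>\<omega>. ?GB (vals (take n Zs) \<omega>))" for j
  proof (induction j)
    case 0 then show ?case by simp
  next
    case (Suc j)
    define k where "k = n - Suc j"
    have kn: "k < n" and nj: "n - j = Suc k" and kj: "0 + Suc k + j = n" using Suc.prems unfolding k_def by auto
    have IH: "sE P (\<lambda>\<omega>. ?GB (vals (take (Suc k) Zs) \<omega> @ replicate j s)) = sE P (\<lambda>\<omega>. ?GB (vals (take n Zs) \<omega>))"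
      using Suc.IH Suc.prems nj by simp
    let ?f = "\<lambda>x. ?GB ([] @ x @ replicate j s)"
    have Lf: "LL (Suc k) ?f (CG*(1+2 * vnorm []+2 * vnorm (replicate j s))^mG) mG"
      by (rule LL_FIXPS[where a=0 and d=j]) (use LG kj in auto)
    have kH: "Zs ! k \<in> H" using ZH kn lZ by auto
    have ind': "seq_indep P Zs" using ind unfolding Zs_def .
    have ik: "indep_of P (take k Zs) (Zs ! k)" by (rule seq_indep_take[OF p ind']) (use kn lZ in simp)
    have lt: "length (take k Zs) = k" using kn lZ by simp
    have ext: "sE P (\<lambda>\<omega>. ?f (vals (take k Zs) \<omega> @ [(Zs ! k) \<omega>]))
        = sE P (\<lambda>\<omega>. sE P (\<lambda>\<omega>'. ?f (vals (take k Zs) \<omega> @ [(Zs ! k) \<omega>'])))"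
      by (rule indep_ext[OF ss tH kH ik]) (use Lf lt in simp)
    have inner: "sE P (\<lambda>\<omega>'. ?f (c @ [(Zs ! k) \<omega>'])) = ?f (c @ [s])" if lc: "length c = k" for c
    proof -
      have Lc: "LL 1 (\<lambda>l. ?f (c @ l @ [])) (CG*(1+2 * vnorm []+2 * vnorm (replicate j s))^mG*(1+2 * vnorm c+2 * vnorm [])^mG) mG"
        by (rule LL_FIXPS[where a=k and d=0]) (use Lf lc in auto)
      have "sE P (\<lambda>\<omega>. (\<lambda>l. ?f (c @ l @ [])) [V k \<omega>]) = (SUP v\<in>{sl..su}. (\<lambda>l. ?f (c @ l @ [])) [v])"
        by (rule Vdist[OF kn, unfolded maximal_dist_def, rule_format, OF LL_imp_lLip[OF Lc]])
      also have "\<dots> = ?f (c @ [s])"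
      proof -
        define u where "u = c @ [s] @ replicate j s"
        have lu: "length u = n" unfolding u_def using lc kj by simp
        have uv: "u[k := v] = c @ [v] @ replicate j s" for v unfolding u_def using lc by (simp add: list_update_append)
        have "(SUP v\<in>{sl..su}. ?GB (u[k := v])) = ?GB (u[k := sc b sl su])"
          by (rule SUP_attained[OF sc_in[OF sig(2)]]) (rule monoB[OF LB lu kn K sig])
        then show ?thesis using uv s_def by simp
      qed
      finally show ?thesis unfolding ZV[OF kn] by simp
    qed
    have "sE P (\<lambda>\<omega>. ?GB (vals (take (n - Suc j) Zs) \<omega> @ replicate (Suc j) s))
        = sE P (\<lambda>\<omega>. ?f (vals (take k Zs) \<omega> @ [s]))" unfolding k_def by simp
    also have "\<dots> = sE P (\<lambda>\<omega>. sE P (\<lambda>\<omega>'. ?f (vals (take k Zs) \<omega> @ [(Zs ! k) \<omega>'])))"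
      using inner lt by simp
    also have "\<dots> = sE P (\<lambda>\<omega>. ?f (vals (take k Zs) \<omega> @ [(Zs ! k) \<omega>]))" using ext by simp
    also have "\<dots> = sE P (\<lambda>\<omega>. ?GB (vals (take (Suc k) Zs) \<omega> @ replicate j s))"
      using vals_take_Suc[of k Zs] kn lZ by simp
    finally show ?case using IH by simp
  qed
  have vZ: "FB n \<phi> (vals Zs \<omega>) = \<phi> (map (\<lambda>i. V i \<omega> * e i \<omega>) [0..<n])" for \<omega>
  proof -
    have "map (\<lambda>i. vals Zs \<omega> ! i * vals Zs \<omega> ! (n + i)) [0..<n] = map (\<lambda>i. V i \<omega> * e i \<omega>) [0..<n]"
      unfolding Zs_def vals_def by (intro map_cong) (auto simp: nth_append)
    then show ?thesis unfolding FB_def by (simp only:)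
  qed
  have "sE P (\<lambda>\<omega>. \<phi> (map (\<lambda>i. V i \<omega> * e i \<omega>) [0..<n])) = sE P (\<lambda>\<omega>. ?GB (vals (take n Zs) \<omega>))"
    using stage1[of n] vZ by simp
  also have "\<dots> = sE P (\<lambda>\<omega>. ?GB (vals (take 0 Zs) \<omega> @ replicate n s))"
    using stage2[of n] by simp
  also have "\<dots> = ?GB (replicate n s)" using sE_const[OF p] by simp
  also have "\<dots> = giter s \<phi> n []" using giter_FB_rep[of "[]" n n \<phi> s] by simp
  also have "\<dots> = classical_E n \<phi> s" using classical_E_giter[OF L] by simp
  finally show ?thesis unfolding s_def .
qed



theorem mainTheorem12:
  fixes M :: "'a measure" and P :: "'a measure set" and H :: "('a \<Rightarrow> real) set"
    and V e :: "nat \<Rightarrow> 'a \<Rightarrow> real" and n :: nat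
    and sl su :: real and \<phi> :: "real list \<Rightarrow> real"
  assumes space: "sublinear_space M P H"
    and sig: "0 \<le> sl" "sl \<le> su"
    and inH: "\<And>i. i < n \<Longrightarrow> V i \<in> H \<and> e i \<in> H"
    and Vdist: "\<And>i. i < n \<Longrightarrow> maximal_dist P (V i) sl su"
    and edist: "\<And>i. i < n \<Longrightarrow> std_normal_dist P (e i)"
    and decomp: "\<And>i. i < n \<Longrightarrow> indep_of P [V i] (e i)"
    and phi: "lLip n \<phi>"
    and cc: "convex_fn n \<phi> \<or> concave_fn n \<phi>"
    and indep: "seq_indep P (map (\<lambda>i \<omega>. V i \<omega> * e i \<omega>) [0..<n])
             \<or> seq_indep P (map V [0..<n] @ map e [0..<n])"
  shows "(concave_fn n \<phi> \<longrightarrow>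
            sE P (\<lambda>\<omega>. \<phi> (map (\<lambda>i. V i \<omega> * e i \<omega>) [0..<n])) = classical_E n \<phi> sl)
       \<and> (convex_fn n \<phi> \<longrightarrow>
            sE P (\<lambda>\<omega>. \<phi> (map (\<lambda>i. V i \<omega> * e i \<omega>) [0..<n])) = classical_E n \<phi> su)"
proof -
  obtain C m where L: "LL n \<phi> C m" using lLip_imp_LL[OF phi] by blast
  have res: "sE P (\<lambda>\<omega>. \<phi> (map (\<lambda>i. V i \<omega> * e i \<omega>) [0..<n])) = classical_E n \<phi> (sc b sl su)"
    if K: "Kf b n \<phi>" for b
    using indep
  proof (elim disjE)
    assume A: "seq_indep P (map (\<lambda>i \<omega>. V i \<omega> * e i \<omega>) [0..<n])"
    show ?thesis by (rule caseA[OF space sig inH Vdist edist decomp L K A])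
  next
    assume B: "seq_indep P (map V [0..<n] @ map e [0..<n])"
    show ?thesis by (rule caseB[OF space sig inH Vdist edist L K B])
  qed
  show ?thesis
  proof (intro conjI impI)
    assume "concave_fn n \<phi>"
    then have "Kf False n \<phi>" unfolding Kf_def by simp
    then show "sE P (\<lambda>\<omega>. \<phi> (map (\<lambda>i. V i \<omega> * e i \<omega>) [0..<n])) = classical_E n \<phi> sl"
      using res[of False] unfolding sc_def by simp
  next
    assume "convex_fn n \<phi>"
    then have "Kf True n \<phi>" unfolding Kf_def by simp
    then show "sE P (\<lambda>\<omega>. \<phi> (map (\<lambda>i. V i \<omega> * e i \<omega>) [0..<n])) = classical_E n \<phi> su"
      using res[of True] unfolding sc_def by simp
  qed
qed


end
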